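(* There are constants $a,b>0$, depending only on $\zeta_l,\zeta_r$ (independent of $E\in\mathbb{R}$, of $N\ge2$ and of $v$), such that $a\|T_N(E)\|\le\|\tilde T_N(E)\|\le b\|T_N(E)\|$ for all $E\in\mathbb{R}$. Consequently, under $\beta=0$, $\zeta_l,\zeta_r>0$, there are constants $c_1,c_2>0$ independent of $N$ with $c_1\int_{\mathbb{R}}\frac{dE}{\|T_N(E)\|^2}\le -\langle e_1,l^{-1}(p_N)e_1\rangle\le c_2\int_{\mathbb{R}}\frac{dE}{\|T_N(E)\|^2}$.
   Context: Let $v:\mathbb{N}\to\mathbb{R}$ be bounded and $N\ge2$. For a sequence $u$, $T^u_N(E)=A^u_N(E)\cdots A^u_1(E)$ with $A^u_n(E)=\begin{pmatrix}u(n)-E&-1\\1&0\end{pmatrix}$; $T_N(E)=T^v_N(E)$. For $\zeta_l,\zeta_r\ge0$, let $\tilde v(1)=v(1)-i\zeta_l$, $\tilde v(N)=v(N)-i\zeta_r$, $\tilde v(n)=v(n)$ otherwise, and $\tilde T_N(E)=T^{\tilde v}_N(E)$. $\|\cdot\|$ is the operator norm. Let $e_1,\dots,e_N$ be the standard basis of $\mathbb{C}^N$, $p_n=|e_n\rangle\langle e_n|$, $h$ the Hermitian matrix $(h\psi)(n)=-\psi(n+1)-\psi(n-1)+v(n)\psi(n)$ with $\psi(0)=\psi(N+1)=0$, and, for $\beta=0$, $l(a)=-i[h,a]-\{\zeta_lp_1+\zeta_rp_N,a\}$ on $M_N(\mathbb{C})$. *)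

theory Defs imports "HOL-Analysis.Analysis" "Jordan_Normal_Form.Matrix" begin

definition mat2 :: "complex \<Rightarrow> complex \<Rightarrow> complex \<Rightarrow> complex \<Rightarrow> complex^2^2" where
  "mat2 a b c d = (\<chi> i j. if i = 1 then (if j = 1 then a else b) else (if j = 1 then c else d))"

definition Astep :: "(nat \<Rightarrow> complex) \<Rightarrow> nat \<Rightarrow> real \<Rightarrow> complex^2^2" where
  "Astep u n E = mat2 (u n - of_real E) (-1) 1 0"

fun Ttrans :: "(nat \<Rightarrow> complex) \<Rightarrow> nat \<Rightarrow> real \<Rightarrow> complex^2^2" where
  "Ttrans u 0 E = Finite_Cartesian_Product.mat 1"
| "Ttrans u (Suc n) E = Astep u (Suc n) E ** Ttrans u n E"

definition opnorm :: "complex^2^2 \<Rightarrow> real" where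
  "opnorm A = onorm (\<lambda>x. A *v x)"

definition vtilde :: "(nat \<Rightarrow> real) \<Rightarrow> nat \<Rightarrow> real \<Rightarrow> real \<Rightarrow> nat \<Rightarrow> complex" where
  "vtilde v N zl zr n =
     (if n = 1 then of_real (v 1) - \<i> * of_real zl
      else if n = N then of_real (v N) - \<i> * of_real zr
      else of_real (v n))"

section \<open>N x N objects (site n in {1..N} corresponds to matrix index n - 1)\<close>

definition hmat :: "nat \<Rightarrow> (nat \<Rightarrow> real) \<Rightarrow> complex Matrix.mat" where
  "hmat N v = Matrix.mat N N (\<lambda>(i, j).
      if i = j then of_real (v (i + 1))
      else if i = j + 1 \<or> j = i + 1 then -1 else 0)"

definition proj :: "nat \<Rightarrow> nat \<Rightarrow> complex Matrix.mat" where
  "proj N n = Matrix.mat N N (\<lambda>(i, j). if i = n - 1 \<and> j = n - 1 then 1 else 0)"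

definition lop :: "nat \<Rightarrow> (nat \<Rightarrow> real) \<Rightarrow> real \<Rightarrow> real \<Rightarrow> complex Matrix.mat \<Rightarrow> complex Matrix.mat" where
  "lop N v zl zr a =
     (let h = hmat N v;
          P = of_real zl \<cdot>\<^sub>m proj N 1 + of_real zr \<cdot>\<^sub>m proj N N
      in (- \<i>) \<cdot>\<^sub>m (h * a - a * h) - (P * a + a * P))"

definition lop_inv :: "nat \<Rightarrow> (nat \<Rightarrow> real) \<Rightarrow> real \<Rightarrow> real \<Rightarrow> complex Matrix.mat \<Rightarrow> complex Matrix.mat" where
  "lop_inv N v zl zr b = (THE x. x \<in> carrier_mat N N \<and> lop N v zl zr x = b)"

end

theory Submission imports Defs "HOL-Complex_Analysis.Cauchy_Integral_Theorem" "HOL-Probability.Sinc_Integral" begin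
no_notation Matrix.vec_index (infixl "$" 100)

lemma mat2_nth[simp]: "mat2 a b c d $ 1 $ 1 = a" "mat2 a b c d $ 1 $ 2 = b"
   "mat2 a b c d $ 2 $ 1 = c" "mat2 a b c d $ 2 $ 2 = d"
  by (simp_all add: mat2_def)

lemma mat2_eq: fixes A :: "complex^2^2"
  shows "A = mat2 (A$1$1) (A$1$2) (A$2$1) (A$2$2)"
  unfolding Finite_Cartesian_Product.vec_eq_iff by (auto simp: forall_2 mat2_def)

lemma mat2_mult: "mat2 a b c d ** mat2 e f g h = mat2 (a*e+b*g) (a*f+b*h) (c*e+d*g) (c*f+d*h)"
  unfolding Finite_Cartesian_Product.vec_eq_iff matrix_matrix_mult_def by (auto simp: forall_2 sum_2)

lemma mat2_one: "(Finite_Cartesian_Product.mat 1 :: complex^2^2) = mat2 1 0 0 1"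
  unfolding Finite_Cartesian_Product.vec_eq_iff by (auto simp: forall_2 Finite_Cartesian_Product.mat_def)

definition "Sl zl = mat2 1 0 (\<i> * of_real zl) 1"
definition "Sr zr = mat2 1 (- \<i> * of_real zr) 0 1"
definition "Sli zl = mat2 1 0 (- \<i> * of_real zl) 1"
definition "Sri zr = mat2 1 (\<i> * of_real zr) 0 1"

lemma Ttrans_tilde_lt:
  assumes "1 \<le> n" "n < N"
  shows "Ttrans (vtilde v N zl zr) n E = Ttrans (\<lambda>k. of_real (v k)) n E ** Sl zl"
  using assms
proof (induction n)
  case 0 then show ?case by simp
next
  case (Suc n)
  show ?case
  proof (cases "n = 0")
    case True
    then show ?thesis
      by (simp add: mat2_one Astep_def vtilde_def Sl_def mat2_mult algebra_simps)
  next
    case False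
    then have "Ttrans (vtilde v N zl zr) n E = Ttrans (\<lambda>k. of_real (v k)) n E ** Sl zl"
      using Suc by simp
    moreover have "Astep (vtilde v N zl zr) (Suc n) E = Astep (\<lambda>k. of_real (v k)) (Suc n) E"
      using False Suc.prems by (simp add: Astep_def vtilde_def)
    ultimately show ?thesis by (simp add: matrix_mul_assoc)
  qed
qed

lemma Ttrans_tilde:
  assumes "N \<ge> 2"
  shows "Ttrans (vtilde v N zl zr) N E = Sr zr ** Ttrans (\<lambda>k. of_real (v k)) N E ** Sl zl"
proof -
  obtain m where m: "N = Suc m" "m \<ge> 1" using assms by (cases N) auto
  have "Ttrans (vtilde v N zl zr) m E = Ttrans (\<lambda>k. of_real (v k)) m E ** Sl zl"
    using m by (intro Ttrans_tilde_lt) auto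
  moreover have "Astep (vtilde v N zl zr) N E = Sr zr ** Astep (\<lambda>k. of_real (v k)) N E"
    using m by (simp add: Astep_def vtilde_def Sr_def mat2_mult algebra_simps)
  ultimately show ?thesis using m by (simp add: matrix_mul_assoc)
qed

lemma Ttrans_untilde:
  assumes "N \<ge> 2"
  shows "Ttrans (\<lambda>k. of_real (v k)) N E = Sri zr ** Ttrans (vtilde v N zl zr) N E ** Sli zl"
proof -
  have a: "Sri zr ** Sr zr = Finite_Cartesian_Product.mat 1"
    by (simp add: Sri_def Sr_def mat2_mult mat2_one)
  have b: "Sl zl ** Sli zl = Finite_Cartesian_Product.mat 1"
    by (simp add: Sli_def Sl_def mat2_mult mat2_one)
  have "Sri zr ** Ttrans (vtilde v N zl zr) N E ** Sli zl
      = (Sri zr ** Sr zr) ** Ttrans (\<lambda>k. of_real (v k)) N E ** (Sl zl ** Sli zl)"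
    using Ttrans_tilde[OF assms] by (simp add: matrix_mul_assoc)
  then show ?thesis using a b by simp
qed

lemma opnorm_mult: "opnorm (A ** B) \<le> opnorm A * opnorm B"
proof -
  have "(*v) (A ** B) = (*v) A \<circ> (*v) B" by (auto simp: matrix_vector_mul_assoc)
  then show ?thesis unfolding opnorm_def
    by (metis onorm_compose matrix_vector_mul_bounded_linear)
qed

lemma opnorm_nonneg: "opnorm A \<ge> 0"
  unfolding opnorm_def by (rule onorm_pos_le[OF matrix_vector_mul_bounded_linear])

lemma norm_vec2: fixes x :: "complex^2" shows "norm x \<le> cmod (x$1) + cmod (x$2)"
  unfolding norm_vec_def by (rule order_trans[OF L2_set_le_sum]) (auto simp: sum_2)

lemma opnorm_le_sum: fixes A :: "complex^2^2"
  shows "opnorm A \<le> cmod (A$1$1) + cmod (A$1$2) + cmod (A$2$1) + cmod (A$2$2)"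
  unfolding opnorm_def
proof (rule onorm_le)
  fix x :: "complex^2"
  have x1: "cmod (x$1) \<le> norm x" and x2: "cmod (x$2) \<le> norm x" by (rule Finite_Cartesian_Product.norm_nth_le)+
  have "(A *v x) $ 1 = A$1$1 * x$1 + A$1$2 * x$2" "(A *v x) $ 2 = A$2$1 * x$1 + A$2$2 * x$2"
    by (simp_all add: matrix_vector_mult_def sum_2)
  then have "norm (A *v x) \<le> cmod (A$1$1 * x$1 + A$1$2 * x$2) + cmod (A$2$1 * x$1 + A$2$2 * x$2)"
    using norm_vec2[of "A *v x"] by simp
  also have "\<dots> \<le> cmod (A$1$1) * norm x + cmod (A$1$2) * norm x + (cmod (A$2$1) * norm x + cmod (A$2$2) * norm x)"
    apply (intro add_mono order_trans[OF norm_triangle_ineq])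
    by (simp_all add: norm_mult mult_left_mono x1 x2)
  finally show "norm (A *v x) \<le> (cmod (A$1$1) + cmod (A$1$2) + cmod (A$2$1) + cmod (A$2$2)) * norm x"
    by (simp add: algebra_simps)
qed

lemma entry_le_opnorm: fixes A :: "complex^2^2"
  shows "cmod (A$i$j) \<le> opnorm A"
proof -
  have "(A *v axis j 1) $ i = A$i$j"
    by (simp add: matrix_vector_mult_def axis_def if_distrib sum.delta' cong: if_cong)
  then have "cmod (A$i$j) \<le> norm (A *v axis j 1)" using Finite_Cartesian_Product.norm_nth_le[of "A *v axis j 1" i] by simp
  also have "\<dots> \<le> opnorm A * norm (axis j (1::complex))"
    unfolding opnorm_def by (rule onorm[OF matrix_vector_mul_bounded_linear])
  finally show ?thesis by (simp add: norm_axis_1)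
qed

theorem part1:
  assumes "zl \<ge> 0" "zr \<ge> 0"
  shows "\<exists>a b. a > 0 \<and> b > 0 \<and>
            (\<forall>(v :: nat \<Rightarrow> real) N (E :: real). bounded (range v) \<and> N \<ge> 2 \<longrightarrow>
               a * opnorm (Ttrans (\<lambda>n. of_real (v n)) N E) \<le> opnorm (Ttrans (vtilde v N zl zr) N E) \<and>
               opnorm (Ttrans (vtilde v N zl zr) N E) \<le> b * opnorm (Ttrans (\<lambda>n. of_real (v n)) N E))"
proof -
  define b where "b = (2 + zr) * (2 + zl)"
  have bpos: "b > 0" using assms by (simp add: b_def)
  have nSr: "opnorm (Sr zr) \<le> 2 + zr" using opnorm_le_sum[of "Sr zr"] assms
    by (simp add: Sr_def norm_mult)
  have nSl: "opnorm (Sl zl) \<le> 2 + zl" using opnorm_le_sum[of "Sl zl"] assms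
    by (simp add: Sl_def norm_mult)
  have nSri: "opnorm (Sri zr) \<le> 2 + zr" using opnorm_le_sum[of "Sri zr"] assms
    by (simp add: Sri_def norm_mult)
  have nSli: "opnorm (Sli zl) \<le> 2 + zl" using opnorm_le_sum[of "Sli zl"] assms
    by (simp add: Sli_def norm_mult)
  have le1: "opnorm (A ** B ** C) \<le> b * opnorm B"
    if "opnorm A \<le> 2 + zr" "opnorm C \<le> 2 + zl" for A B C
  proof -
    have "opnorm (A ** B ** C) \<le> opnorm (A ** B) * opnorm C" by (rule opnorm_mult)
    also have "\<dots> \<le> (opnorm A * opnorm B) * opnorm C"
      by (intro mult_right_mono opnorm_mult opnorm_nonneg)
    also have "\<dots> \<le> ((2 + zr) * opnorm B) * (2 + zl)"
      using that assms opnorm_nonneg[of A] opnorm_nonneg[of B] opnorm_nonneg[of C]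
      by (intro mult_mono) (auto intro: mult_mono)
    finally show ?thesis by (simp add: b_def algebra_simps)
  qed
  have main: "1/b * opnorm (Ttrans (\<lambda>n. of_real (v n)) N E) \<le> opnorm (Ttrans (vtilde v N zl zr) N E) \<and>
       opnorm (Ttrans (vtilde v N zl zr) N E) \<le> b * opnorm (Ttrans (\<lambda>n. of_real (v n)) N E)"
    if h: "N \<ge> 2" for v :: "nat \<Rightarrow> real" and N :: nat and E :: real
  proof
    let ?T = "Ttrans (\<lambda>n. of_real (v n)) N E" and ?U = "Ttrans (vtilde v N zl zr) N E"
    show "opnorm ?U \<le> b * opnorm ?T"
      using le1[OF nSr nSl] Ttrans_tilde[of N v zl zr E] h by simp
    have "opnorm ?T \<le> b * opnorm ?U"
      using le1[OF nSri nSli] Ttrans_untilde[where N=N and v=v and zl=zl and zr=zr and E=E] h by simp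
    then show "1/b * opnorm ?T \<le> opnorm ?U" using bpos by (simp add: field_simps)
  qed
  show ?thesis
    apply (rule exI[of _ "1/b"], rule exI[of _ b])
    using bpos main by auto
qed

fun wseq :: "(nat \<Rightarrow> complex) \<Rightarrow> complex \<Rightarrow> nat \<Rightarrow> complex" where
  "wseq u z 0 = 0"
| "wseq u z (Suc 0) = 1"
| "wseq u z (Suc (Suc n)) = (u (Suc n) - z) * wseq u z (Suc n) - wseq u z n"

lemma Ttrans_col1:
  "Ttrans u n E $ 1 $ 1 = wseq u (of_real E) (Suc n) \<and> Ttrans u n E $ 2 $ 1 = wseq u (of_real E) n"
proof (induction n)
  case 0 then show ?case by (simp add: mat2_one)
next
  case (Suc n)
  then show ?case
    by (simp add: matrix_matrix_mult_def sum_2 Astep_def)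
qed

lemma Ttrans_real: "Im (Ttrans (\<lambda>k. of_real (v k)) n E $ i $ j) = 0"
proof (induction n arbitrary: i j)
  case 0 then show ?case by (simp add: Finite_Cartesian_Product.mat_def)
next
  case (Suc n)
  then show ?case
    using exhaust_2[of i]
    by (auto simp: matrix_matrix_mult_def sum_2 Astep_def mat2_def)
qed

lemma det_mat2: "det (mat2 a b c d) = a * d - b * c"
  by (simp add: det_2)

lemma Ttrans_det: "Ttrans u n E $1$1 * Ttrans u n E $2$2 - Ttrans u n E $1$2 * Ttrans u n E $2$1 = 1"
proof -
  have "det (Ttrans u n E) = 1"
    by (induction n) (simp_all add: det_mul det_I Astep_def det_mat2)
  then show ?thesis by (simp add: det_2)
qed

lemma sum4_sq: "((a::real) + b + c + d)^2 \<le> 4 * (a^2 + b^2 + c^2 + d^2)"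
proof -
  have "4 * (a^2 + b^2 + c^2 + d^2) - (a + b + c + d)^2 = (a-b)^2+(a-c)^2+(a-d)^2+(b-c)^2+(b-d)^2+(c-d)^2"
    by (simp add: power2_eq_square algebra_simps)
  moreover have "(a-b)^2+(a-c)^2+(a-d)^2+(b-c)^2+(b-d)^2+(c-d)^2 \<ge> 0" by simp
  ultimately show ?thesis by linarith
qed

lemma opnorm_sq_bounds: fixes A :: "complex^2^2"
  defines "S \<equiv> cmod (A$1$1)^2 + cmod (A$1$2)^2 + cmod (A$2$1)^2 + cmod (A$2$2)^2"
  shows "opnorm A ^ 2 \<le> 4 * S" "S \<le> 4 * opnorm A ^ 2"
proof -
  have "opnorm A ^ 2 \<le> (cmod (A$1$1) + cmod (A$1$2) + cmod (A$2$1) + cmod (A$2$2))^2"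
    using opnorm_le_sum[of A] opnorm_nonneg[of A] by (intro power_mono) auto
  also have "\<dots> \<le> 4 * S" unfolding S_def by (rule sum4_sq)
  finally show "opnorm A ^ 2 \<le> 4 * S" .
  have "cmod (A$i$j)^2 \<le> opnorm A ^ 2" for i j
    using entry_le_opnorm[of A i j] by (intro power_mono) auto
  from this[of 1 1] this[of 1 2] this[of 2 1] this[of 2 2]
  show "S \<le> 4 * opnorm A ^ 2" unfolding S_def by linarith
qed

lemma tilde_entry:
  fixes T :: "complex^2^2"
  shows "(Sr zr ** T ** Sl zl) $ 1 $ 1 = T$1$1 + \<i> * zl * T$1$2 - \<i> * zr * T$2$1 + zl * zr * T$2$2"
  by (simp add: Sr_def Sl_def matrix_matrix_mult_def sum_2 algebra_simps)

lemma real_quad_identity: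
  fixes t11 t12 t21 t22 zl zr :: real
  assumes "t11 * t22 - t12 * t21 = 1"
  shows "cmod (complex_of_real t11 + \<i> * zl * t12 - \<i> * zr * t21 + zl * zr * t22)^2
        = t11^2 + (zl*zr)^2 * t22^2 + zl^2 * t12^2 + zr^2 * t21^2 + 2 * zl * zr"
proof -
  have "complex_of_real t11 + \<i> * zl * t12 - \<i> * zr * t21 + zl * zr * t22
     = Complex (t11 + zl*zr*t22) (zl*t12 - zr*t21)"
    by (simp add: Complex_eq algebra_simps)
  then have "cmod (complex_of_real t11 + \<i> * zl * t12 - \<i> * zr * t21 + zl * zr * t22)^2
      = (t11 + zl*zr*t22)^2 + (zl*t12 - zr*t21)^2"
    by (simp add: cmod_def)
  also have "\<dots> = t11^2 + (zl*zr)^2 * t22^2 + zl^2 * t12^2 + zr^2 * t21^2 + 2 * zl * zr * (t11 * t22 - t12 * t21)"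
    by (simp add: power2_eq_square algebra_simps)
  finally show ?thesis using assms by simp
qed

definition Kl :: "real \<Rightarrow> real \<Rightarrow> real" where "Kl zl zr = min (min 1 ((zl*zr)^2)) (min (zl^2) (zr^2))"
definition Ku :: "real \<Rightarrow> real \<Rightarrow> real" where "Ku zl zr = max (max 1 ((zl*zr)^2)) (max (zl^2) (zr^2)) + zl * zr"

lemma Kl_pos: "zl > 0 \<Longrightarrow> zr > 0 \<Longrightarrow> Kl zl zr > 0"
  by (auto simp: Kl_def min_def)
lemma Ku_pos: "zl > 0 \<Longrightarrow> zr > 0 \<Longrightarrow> Ku zl zr > 0"
proof -
  assume "zl > 0" "zr > 0"
  have "max (max 1 ((zl*zr)^2)) (max (zl^2) (zr^2)) \<ge> 1" by simp
  moreover have "zl * zr > 0" using \<open>zl > 0\<close> \<open>zr > 0\<close> by simp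
  ultimately show ?thesis unfolding Ku_def by linarith
qed

lemma D_bounds:
  fixes v :: "nat \<Rightarrow> real" and E :: real
  assumes N: "N \<ge> 2" and z: "zl > 0" "zr > 0"
  defines "T \<equiv> Ttrans (\<lambda>k. of_real (v k)) N E"
  defines "D \<equiv> wseq (vtilde v N zl zr) (of_real E) (Suc N)"
  shows "opnorm T > 0"
    "Kl zl zr / 4 * opnorm T ^ 2 \<le> cmod D ^ 2"
    "cmod D ^ 2 \<le> 4 * Ku zl zr * opnorm T ^ 2"
proof -
  define t11 where "t11 = Re (T$1$1)"
  define t12 where "t12 = Re (T$1$2)"
  define t21 where "t21 = Re (T$2$1)"
  define t22 where "t22 = Re (T$2$2)"
  have e: "T$1$1 = of_real t11" "T$1$2 = of_real t12" "T$2$1 = of_real t21" "T$2$2 = of_real t22"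
    unfolding t11_def t12_def t21_def t22_def T_def
    by (simp_all add: complex_eq_iff Ttrans_real)
  have det: "t11 * t22 - t12 * t21 = 1"
    using Ttrans_det[of "\<lambda>k. of_real (v k)" N E] unfolding T_def[symmetric] e
    by (metis of_real_1 of_real_diff of_real_eq_iff of_real_mult)
  have "D = Ttrans (vtilde v N zl zr) N E $ 1 $ 1"
    unfolding D_def using Ttrans_col1 by simp
  also have "\<dots> = (Sr zr ** T ** Sl zl) $ 1 $ 1" unfolding T_def using Ttrans_tilde[OF N] by simp
  finally have "cmod D ^ 2 = t11^2 + (zl*zr)^2 * t22^2 + zl^2 * t12^2 + zr^2 * t21^2 + 2 * zl * zr"
    using real_quad_identity[OF det, of zl zr] by (simp add: tilde_entry e)
  note Dq = this
  define S where "S = t11^2 + t12^2 + t21^2 + t22^2"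
  have SA: "S = cmod (T$1$1)^2 + cmod (T$1$2)^2 + cmod (T$2$1)^2 + cmod (T$2$2)^2"
    by (simp add: S_def e)
  have S2: "S \<ge> 2"
  proof -
    have "S - 2 = (t11 - t22)^2 + (t12 + t21)^2"
      using det by (simp add: S_def power2_eq_square algebra_simps)
    then show ?thesis using zero_le_power2[of "t11-t22"] zero_le_power2[of "t12+t21"] by linarith
  qed
  have o1: "opnorm T ^ 2 \<le> 4 * S" and o2: "S \<le> 4 * opnorm T ^ 2"
    using opnorm_sq_bounds[of T] SA by simp_all
  show "opnorm T > 0"
  proof -
    have "opnorm T ^ 2 > 0" using o2 S2 by linarith
    then have "opnorm T \<noteq> 0" by auto
    then show ?thesis using opnorm_nonneg[of T] by linarith
  qed
  have Kl: "Kl zl zr * S \<le> cmod D ^ 2"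
  proof -
    have a: "Kl zl zr \<le> 1" "Kl zl zr \<le> (zl*zr)^2" "Kl zl zr \<le> zl^2" "Kl zl zr \<le> zr^2"
      by (auto simp: Kl_def)
    have "Kl zl zr * t11^2 \<le> 1 * t11^2" "Kl zl zr * t22^2 \<le> (zl*zr)^2 * t22^2"
      "Kl zl zr * t12^2 \<le> zl^2 * t12^2" "Kl zl zr * t21^2 \<le> zr^2 * t21^2"
      by (intro mult_right_mono a; simp)+
    then have "Kl zl zr * S \<le> t11^2 + (zl*zr)^2 * t22^2 + zl^2 * t12^2 + zr^2 * t21^2"
      unfolding S_def distrib_left by linarith
    also have "\<dots> \<le> cmod D ^ 2" using Dq z by simp
    finally show ?thesis .
  qed
  have Ku: "cmod D ^ 2 \<le> Ku zl zr * S"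
  proof -
    define M where "M = max (max 1 ((zl*zr)^2)) (max (zl^2) (zr^2))"
    have a: "1 \<le> M" "(zl*zr)^2 \<le> M" "zl^2 \<le> M" "zr^2 \<le> M" by (auto simp: M_def)
    have "1 * t11^2 \<le> M * t11^2" "(zl*zr)^2 * t22^2 \<le> M * t22^2"
      "zl^2 * t12^2 \<le> M * t12^2" "zr^2 * t21^2 \<le> M * t21^2"
      by (intro mult_right_mono a; simp)+
    then have "t11^2 + (zl*zr)^2 * t22^2 + zl^2 * t12^2 + zr^2 * t21^2 \<le> M * S"
      unfolding S_def distrib_left by linarith
    moreover have "2 * zl * zr \<le> zl * zr * S"
      using mult_left_mono[OF S2, of "zl*zr"] z by (simp add: mult.commute mult.left_commute)
    ultimately have "cmod D ^ 2 \<le> M * S + zl * zr * S" using Dq by linarith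
    also have "\<dots> = Ku zl zr * S" by (simp add: Ku_def M_def distrib_right)
    finally show ?thesis .
  qed
  show "Kl zl zr / 4 * opnorm T ^ 2 \<le> cmod D ^ 2"
  proof -
    have "Kl zl zr / 4 * opnorm T ^ 2 \<le> Kl zl zr / 4 * (4 * S)"
      using o1 Kl_pos[OF z] by (intro mult_left_mono) auto
    then show ?thesis using Kl by simp
  qed
  show "cmod D ^ 2 \<le> 4 * Ku zl zr * opnorm T ^ 2"
  proof -
    have "Ku zl zr * S \<le> Ku zl zr * (4 * opnorm T ^ 2)"
      using o2 Ku_pos[OF z] by (intro mult_left_mono) auto
    then show ?thesis using Ku by simp
  qed
qed

lemma wseq_current:
  "Im (cnj (wseq u z n) * wseq u z (Suc n)) = (\<Sum>s=1..n. (Im (u s) - Im z) * (cmod (wseq u z s))^2)"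
proof (induction n)
  case 0 then show ?case by simp
next
  case (Suc n)
  define a where "a = wseq u z n"
  define b where "b = wseq u z (Suc n)"
  have "Im (cnj b * ((u (Suc n) - z) * b - a)) = (Im (u (Suc n)) - Im z) * (cmod b)^2 + Im (cnj a * b)"
    using cmod_power2[of b] by (simp add: power2_eq_square algebra_simps)
  then show ?case using Suc by (simp add: a_def b_def)
qed

lemma wseq_nonzero:
  assumes "Im (u 1) < 0" "\<And>s. Im (u s) \<le> 0" "Im z \<ge> 0" "n \<ge> 1"
  shows "wseq u z (Suc n) \<noteq> 0"
proof
  assume h: "wseq u z (Suc n) = 0"
  let ?f = "\<lambda>s. (Im (u s) - Im z) * (cmod (wseq u z s))^2"
  have "sum ?f {1..n} = 0" using wseq_current[of u z n] h by simp
  moreover have "sum ?f {1..n} = ?f 1 + sum ?f {Suc 1..n}"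
    using assms(4) by (rule sum.atLeast_Suc_atMost)
  moreover have "sum ?f {Suc 1..n} \<le> 0"
  proof (intro sum_nonpos mult_nonpos_nonneg)
    fix s show "Im (u s) - Im z \<le> 0" using assms(2)[of s] assms(3) by linarith
  qed simp
  moreover have "?f 1 < 0" using assms(1,3) by simp
  ultimately show False by linarith
qed

lemma wseq_holo: "(\<lambda>z. wseq u z n) holomorphic_on UNIV"
proof -
  have "(\<lambda>z. wseq u z n) holomorphic_on UNIV \<and> (\<lambda>z. wseq u z (Suc n)) holomorphic_on UNIV"
    by (induction n) (auto intro!: holomorphic_intros)
  then show ?thesis by simp
qed

lemma wseq_cont: "continuous_on S (\<lambda>z. wseq u z n)"
  using holomorphic_on_imp_continuous_on[OF wseq_holo] continuous_on_subset by blast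

lemma eventually_nonzero_at_infinity: "eventually (\<lambda>z::complex. z \<noteq> 0) at_infinity"
  unfolding eventually_at_infinity by (rule exI[of _ 1]) auto

lemma tendsto_c_inverse: "((\<lambda>z::complex. c * inverse z) \<longlongrightarrow> 0) at_infinity"
  using tendsto_mult[OF tendsto_const tendsto_inverse_0, of c] by simp

lemma wseq_asym: "((\<lambda>z. wseq u z (Suc n) / z ^ n) \<longlongrightarrow> (-1)^n) at_infinity"
proof -
  have "((\<lambda>z. wseq u z (Suc n) / z ^ n) \<longlongrightarrow> (-1)^n) at_infinity \<and>
        ((\<lambda>z. wseq u z (Suc (Suc n)) / z ^ Suc n) \<longlongrightarrow> (-1)^Suc n) at_infinity"
  proof (induction n)
    case 0
    have "((\<lambda>z. u 1 * inverse z - 1) \<longlongrightarrow> 0 - 1) at_infinity"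
      by (intro tendsto_diff tendsto_c_inverse tendsto_const)
    moreover have "eventually (\<lambda>z. u 1 * inverse z - 1 = wseq u z (Suc (Suc 0)) / z ^ Suc 0) at_infinity"
      using eventually_nonzero_at_infinity by eventually_elim (simp add: field_simps)
    ultimately have "((\<lambda>z. wseq u z (Suc (Suc 0)) / z ^ Suc 0) \<longlongrightarrow> (-1)^Suc 0) at_infinity"
      using Lim_transform_eventually by fastforce
    then show ?case by simp
  next
    case (Suc n)
    then have A: "((\<lambda>z. wseq u z (Suc n) / z ^ n) \<longlongrightarrow> (-1)^n) at_infinity"
      and B: "((\<lambda>z. wseq u z (Suc (Suc n)) / z ^ Suc n) \<longlongrightarrow> (-1)^Suc n) at_infinity" by auto
    have "((\<lambda>z. (u (Suc (Suc n)) * inverse z - 1) * (wseq u z (Suc (Suc n)) / z ^ Suc n)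
              - (inverse z * inverse z) * (wseq u z (Suc n) / z ^ n))
          \<longlongrightarrow> (0 - 1) * (-1)^Suc n - (0 * 0) * (-1)^n) at_infinity"
      by (intro tendsto_diff tendsto_mult tendsto_c_inverse tendsto_const A B tendsto_inverse_0)
    moreover have "eventually (\<lambda>z. (u (Suc (Suc n)) * inverse z - 1) * (wseq u z (Suc (Suc n)) / z ^ Suc n)
              - (inverse z * inverse z) * (wseq u z (Suc n) / z ^ n)
         = wseq u z (Suc (Suc (Suc n))) / z ^ Suc (Suc n)) at_infinity"
      using eventually_nonzero_at_infinity by eventually_elim (simp add: field_simps)
    ultimately have "((\<lambda>z. wseq u z (Suc (Suc (Suc n))) / z ^ Suc (Suc n)) \<longlongrightarrow> (0 - 1) * (-1)^Suc n - (0 * 0) * (-1)^n) at_infinity"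
      using Lim_transform_eventually by fastforce
    then show ?case using B by simp
  qed
  then show ?thesis by simp
qed

definition phi :: "(nat \<Rightarrow> complex) \<Rightarrow> nat \<Rightarrow> nat \<Rightarrow> complex \<Rightarrow> complex" where
  "phi u N j z = wseq u z j / wseq u z (Suc N)"

lemma phi_asym:
  assumes "m < N"
  shows "((\<lambda>z. z * phi u N (Suc m) z) \<longlongrightarrow> (if Suc m = N then -1 else 0)) at_infinity"
proof -
  define k where "k = N - Suc m"
  have Nk: "N = Suc m + k" using assms k_def by simp
  have lim: "((\<lambda>z. (wseq u z (Suc m) / z ^ m) / (wseq u z (Suc N) / z ^ N) * inverse z ^ k)
      \<longlongrightarrow> ((-1)^m / (-1)^N) * 0 ^ k) at_infinity"
    by (intro tendsto_mult tendsto_divide wseq_asym tendsto_power tendsto_inverse_0) simp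
  have ev: "eventually (\<lambda>z. (wseq u z (Suc m) / z ^ m) / (wseq u z (Suc N) / z ^ N) * inverse z ^ k
      = z * phi u N (Suc m) z) at_infinity"
    using eventually_nonzero_at_infinity
  proof eventually_elim
    case (elim z)
    then show ?case unfolding phi_def Nk
      by (simp add: field_simps power_add)
  qed
  have val: "((-1)^m / (-1)^N) * (0::complex) ^ k = (if Suc m = N then -1 else 0)"
    using Nk by (cases k) auto
  show ?thesis using Lim_transform_eventually[OF lim ev] val by simp
qed

lemma arc_image_upper:
  assumes "L \<ge> 0"
  shows "path_image (part_circlepath 0 L 0 pi) \<subseteq> {z. Im z \<ge> 0}"
proof
  fix z assume "z \<in> path_image (part_circlepath 0 L 0 pi)"
  then obtain t where t: "0 \<le> t" "t \<le> pi" "z = of_real L * exp (\<i> * of_real t)"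
    by (auto simp: path_image_part_circlepath)
  have e: "Im (exp (\<i> * complex_of_real t)) = sin t" using Im_exp[of "\<i> * of_real t"] by simp
  show "z \<in> {z. Im z \<ge> 0}" using assms t e by (simp add: sin_ge_zero)
qed

lemma arc_image_norm:
  assumes "L \<ge> 0" "z \<in> path_image (part_circlepath 0 L 0 pi)"
  shows "norm z = L"
  using path_image_part_circlepath_subset[of 0 pi L 0] assms by auto

lemma arc_integral_inverse:
  assumes "L > 0"
  shows "contour_integral (part_circlepath 0 L 0 pi) (\<lambda>z. c / z) = \<i> * pi * c"
proof -
  have "contour_integral (part_circlepath 0 L 0 pi) (\<lambda>z. c / z)
      = integral {0..pi} (\<lambda>t. c / (0 + complex_of_real L * cis t) * complex_of_real L * \<i> * cis t)"
    by (rule contour_integral_part_circlepath_eq) simp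
  also have "\<dots> = integral {0..pi} (\<lambda>t. c * \<i>)"
    using assms by (intro integral_cong) (simp add: field_simps)
  also have "\<dots> = \<i> * pi * c" by (simp add: scaleR_conv_of_real mult_ac)
  finally show ?thesis .
qed

lemma half_disc_integral:
  fixes f :: "complex \<Rightarrow> complex"
  assumes cont: "continuous_on {z. Im z \<ge> 0} f"
    and diff: "\<And>z. Im z \<ge> 0 \<Longrightarrow> f field_differentiable at z"
    and L: "L > 0"
  shows "integral {-L..L} (\<lambda>x. f (of_real x)) = - contour_integral (part_circlepath 0 L 0 pi) f"
proof -
  let ?S = "{z. Im z \<ge> 0}"
  let ?l = "linepath (- complex_of_real L) (complex_of_real L)"
  let ?a = "part_circlepath 0 L 0 pi"
  have seg: "closed_segment (- complex_of_real L) (complex_of_real L) \<subseteq> ?S"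
    by (rule closed_segment_subset) (auto intro: convex_halfspace_Im_ge)
  have arc: "path_image ?a \<subseteq> ?S" using L by (intro arc_image_upper) simp
  have il: "f contour_integrable_on ?l"
    by (rule contour_integrable_continuous_linepath) (rule continuous_on_subset[OF cont seg])
  have ia: "f contour_integrable_on ?a"
    by (rule contour_integrable_continuous_part_circlepath) (rule continuous_on_subset[OF cont arc])
  have fin: "pathfinish ?a = pathstart ?l"
    by (simp add: exp_Euler)
  have st: "pathfinish ?l = pathstart ?a" by simp
  have "(f has_contour_integral 0) (?l +++ ?a)"
  proof (rule Cauchy_theorem_convex[of ?S f "{}"])
    show "continuous_on ?S f" by (rule cont)
    show "convex ?S" by (rule convex_halfspace_Im_ge)
    show "finite {}" by simp
    show "f field_differentiable at x" if "x \<in> interior ?S - {}" for x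
      using that interior_subset[of ?S] diff by blast
    show "valid_path (?l +++ ?a)" using st by (intro valid_path_join) auto
    show "path_image (?l +++ ?a) \<subseteq> ?S"
      using st seg arc by (subst path_image_join) auto
    show "pathfinish (?l +++ ?a) = pathstart (?l +++ ?a)" using fin by simp
  qed
  moreover have "(f has_contour_integral (contour_integral ?l f + contour_integral ?a f)) (?l +++ ?a)"
    by (intro has_contour_integral_join has_contour_integral_integral il ia) auto
  ultimately have sum0: "contour_integral ?l f + contour_integral ?a f = 0"
    using has_contour_integral_unique by blast
  have "(f has_contour_integral (contour_integral ?l f)) ?l"
    by (rule has_contour_integral_integral[OF il])
  then have "((\<lambda>x. f (of_real x)) has_integral (contour_integral ?l f)) {-L..L}"
    using L by (subst (asm) has_contour_integral_linepath_Reals_iff) auto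
  then have "integral {-L..L} (\<lambda>x. f (of_real x)) = contour_integral ?l f"
    by (rule integral_unique)
  then show ?thesis using sum0 by (simp add: eq_neg_iff_add_eq_0)
qed

lemma arc_limit:
  fixes f :: "complex \<Rightarrow> complex"
  assumes cont: "continuous_on {z. Im z \<ge> 0} f"
    and lim: "((\<lambda>z. z * f z) \<longlongrightarrow> c) at_infinity"
  shows "((\<lambda>L. contour_integral (part_circlepath 0 L 0 pi) f) \<longlongrightarrow> \<i> * pi * c) at_top"
proof (rule tendstoI)
  fix e :: real assume e: "e > 0"
  define \<epsilon> where "\<epsilon> = e / (2 * pi)"
  have \<epsilon>: "\<epsilon> > 0" using e by (simp add: \<epsilon>_def)
  have "eventually (\<lambda>z. dist (z * f z) c < \<epsilon>) at_infinity"
    using tendstoD[OF lim \<epsilon>] .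
  then obtain R where R: "\<And>z. norm z \<ge> R \<Longrightarrow> dist (z * f z) c < \<epsilon>"
    unfolding eventually_at_infinity by blast
  have "eventually (\<lambda>L. L \<ge> max R 1) at_top" by (rule eventually_ge_at_top)
  then show "eventually (\<lambda>L. dist (contour_integral (part_circlepath 0 L 0 pi) f) (\<i> * pi * c) < e) at_top"
  proof eventually_elim
    case (elim L)
    then have L: "L > 0" "L \<ge> R" by auto
    let ?a = "part_circlepath 0 L 0 pi"
    have arc: "path_image ?a \<subseteq> {z. Im z \<ge> 0}" using L by (intro arc_image_upper) simp
    have ia: "f contour_integrable_on ?a"
      by (rule contour_integrable_continuous_part_circlepath) (rule continuous_on_subset[OF cont arc])
    have nz: "0 \<notin> path_image ?a" using arc_image_norm[of L] L by force
    have ib: "(\<lambda>z. c / z) contour_integrable_on ?a"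
      by (rule contour_integrable_continuous_part_circlepath)
         (intro continuous_intros, use nz in auto)
    have eq: "contour_integral ?a f - \<i> * pi * c = contour_integral ?a (\<lambda>z. f z - c / z)"
      using contour_integral_diff[OF ia ib] arc_integral_inverse[OF L(1), of c] by simp
    have bd: "cmod (f z - c / z) \<le> \<epsilon> / L" if "z \<in> path_image ?a" for z
    proof -
      have nzL: "norm z = L" using arc_image_norm[OF _ that] L by simp
      have "f z - c / z = (z * f z - c) / z" using nzL L by (auto simp: field_simps)
      then have "cmod (f z - c / z) = cmod (z * f z - c) / L" by (simp add: norm_divide nzL)
      also have "\<dots> \<le> \<epsilon> / L" using R[of z] nzL L
        by (intro divide_right_mono) (auto simp: dist_norm less_imp_le)
      finally show ?thesis .
    qed
    have "cmod (contour_integral ?a (\<lambda>z. f z - c / z)) \<le> \<epsilon> / L * L * \<bar>pi - 0\<bar>"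
      by (rule contour_integral_bound_part_circlepath)
         (use contour_integrable_diff[OF ia ib] bd L \<epsilon> in auto)
    also have "\<dots> = \<epsilon> * pi" using L by simp
    also have "\<dots> < e" using e by (simp add: \<epsilon>_def)
    finally show ?case using eq by (simp add: dist_norm)
  qed
qed

lemma PV_limit:
  fixes f :: "complex \<Rightarrow> complex"
  assumes cont: "continuous_on {z. Im z \<ge> 0} f"
    and diff: "\<And>z. Im z \<ge> 0 \<Longrightarrow> f field_differentiable at z"
    and lim: "((\<lambda>z. z * f z) \<longlongrightarrow> c) at_infinity"
  shows "((\<lambda>L. integral {-L..L} (\<lambda>x. f (of_real x))) \<longlongrightarrow> - (\<i> * pi * c)) at_top"
proof -
  have "((\<lambda>L. - contour_integral (part_circlepath 0 L 0 pi) f) \<longlongrightarrow> - (\<i> * pi * c)) at_top"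
    by (intro tendsto_minus arc_limit[OF cont lim])
  moreover have "eventually (\<lambda>L. - contour_integral (part_circlepath 0 L 0 pi) f
                  = integral {-L..L} (\<lambda>x. f (of_real x))) at_top"
    using eventually_gt_at_top[of 0]
    by eventually_elim (simp add: half_disc_integral[OF cont diff])
  ultimately show ?thesis using Lim_transform_eventually by fastforce
qed

lemma LINT_eq_PV_limit:
  fixes g :: "real \<Rightarrow> complex"
  assumes int: "integrable lborel g" and lim: "((\<lambda>L. integral {-L..L} g) \<longlongrightarrow> I) at_top"
  shows "integral\<^sup>L lborel g = I"
proof -
  have eq: "integral {-L..L} g = (LINT x|lborel. indicator {-L..L} x *\<^sub>R g x)" for L
  proof -
    have "set_integrable lborel {-L..L} g"
      unfolding set_integrable_def by (rule integrable_mult_indicator) (auto intro: int)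
    then show ?thesis
      using set_borel_integral_eq_integral(2) by (metis set_lebesgue_integral_def)
  qed
  have "((\<lambda>L. LINT x|lborel. indicator {-L..L} x *\<^sub>R g x) \<longlongrightarrow> integral\<^sup>L lborel g) at_top"
  proof (rule integral_dominated_convergence_at_top[where w = "\<lambda>x. norm (g x)"])
    show "g \<in> borel_measurable lborel" using int by auto
    show "(\<lambda>x. indicator {-L..L} x *\<^sub>R g x) \<in> borel_measurable lborel" for L
      using int by (intro borel_measurable_integrable integrable_mult_indicator) auto
    show "integrable lborel (\<lambda>x. norm (g x))" using int by auto
    show "AE x in lborel. ((\<lambda>L. indicator {-L..L} x *\<^sub>R g x) \<longlongrightarrow> g x) at_top"
    proof (rule AE_I2)
      fix x :: real
      have "eventually (\<lambda>L. indicator {-L..L} x *\<^sub>R g x = g x) at_top"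
        using eventually_ge_at_top[of "\<bar>x\<bar>"] by eventually_elim (auto simp: indicator_def)
      then show "((\<lambda>L. indicator {-L..L} x *\<^sub>R g x) \<longlongrightarrow> g x) at_top"
        by (rule tendsto_eventually)
    qed
    show "\<forall>\<^sub>F L in at_top. AE x in lborel. norm (indicator {-L..L} x *\<^sub>R g x) \<le> norm (g x)"
      by (auto simp: indicator_def)
  qed
  then have "((\<lambda>L. integral {-L..L} g) \<longlongrightarrow> integral\<^sup>L lborel g) at_top" by (simp add: eq)
  then show ?thesis using lim tendsto_unique trivial_limit_at_top_linorder by blast
qed

definition gam :: "nat \<Rightarrow> real \<Rightarrow> real \<Rightarrow> nat \<Rightarrow> real" where
  "gam N zl zr i = (if i = 0 then zl else 0) + (if i = N - 1 then zr else 0)"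

definition hh :: "nat \<Rightarrow> (nat \<Rightarrow> real) \<Rightarrow> nat \<Rightarrow> nat \<Rightarrow> real" where
  "hh N v i k = (if i = k then v (i+1) else if i = k + 1 \<or> k = i + 1 then -1 else 0)"

lemma hh_sym: "hh N v i k = hh N v k i"
  by (auto simp: hh_def)

lemma hmat_entry: "i < N \<Longrightarrow> k < N \<Longrightarrow> hmat N v $$ (i,k) = of_real (hh N v i k)"
  by (simp add: hmat_def hh_def)

lemma hmat_carrier: "hmat N v \<in> carrier_mat N N" by (simp add: hmat_def)
lemma proj_carrier: "proj N n \<in> carrier_mat N N" by (simp add: proj_def)

lemma mult_entry:
  assumes "A \<in> carrier_mat N N" "B \<in> carrier_mat N N" "i < N" "j < N"
  shows "(A * B) $$ (i,j) = (\<Sum>k<N. A $$ (i,k) * B $$ (k,j))"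
  using assms by (auto simp: scalar_prod_def atLeast0LessThan intro!: sum.cong)

lemma Pmat_entry:
  assumes "i < N" "k < N"
  shows "(of_real zl \<cdot>\<^sub>m proj N 1 + of_real zr \<cdot>\<^sub>m proj N N) $$ (i,k)
         = (if i = k then of_real (gam N zl zr i) else 0)"
  using assms by (auto simp: proj_def gam_def)

lemma Pmat_carrier: "(of_real zl \<cdot>\<^sub>m proj N 1 + of_real zr \<cdot>\<^sub>m proj N N) \<in> carrier_mat N N"
  by (simp add: proj_def)

lemma lop_entry:
  assumes x: "x \<in> carrier_mat N N" and ij: "i < N" "j < N"
  shows "lop N v zl zr x $$ (i,j) =
    - \<i> * ((\<Sum>k<N. of_real (hh N v i k) * x $$ (k,j)) - (\<Sum>k<N. x $$ (i,k) * of_real (hh N v k j)))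
    - of_real (gam N zl zr i + gam N zl zr j) * x $$ (i,j)"
proof -
  define P where "P = of_real zl \<cdot>\<^sub>m proj N 1 + of_real zr \<cdot>\<^sub>m proj N N"
  have P: "P \<in> carrier_mat N N" unfolding P_def by (rule Pmat_carrier)
  have h: "hmat N v \<in> carrier_mat N N" by (rule hmat_carrier)
  have e1: "(hmat N v * x) $$ (i,j) = (\<Sum>k<N. of_real (hh N v i k) * x $$ (k,j))"
    using mult_entry[OF h x ij] ij by (simp add: hmat_entry)
  have e2: "(x * hmat N v) $$ (i,j) = (\<Sum>k<N. x $$ (i,k) * of_real (hh N v k j))"
    using mult_entry[OF x h ij] ij by (simp add: hmat_entry)
  have e3: "(P * x) $$ (i,j) = of_real (gam N zl zr i) * x $$ (i,j)"
  proof -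
    have "(P * x) $$ (i,j) = (\<Sum>k<N. P $$ (i,k) * x $$ (k,j))" by (rule mult_entry[OF P x ij])
    also have "\<dots> = (\<Sum>k<N. if k = i then of_real (gam N zl zr i) * x $$ (i,j) else 0)"
      using ij by (intro sum.cong) (auto simp: P_def proj_def gam_def)
    also have "\<dots> = of_real (gam N zl zr i) * x $$ (i,j)" using ij by simp
    finally show ?thesis .
  qed
  have e4: "(x * P) $$ (i,j) = x $$ (i,j) * of_real (gam N zl zr j)"
  proof -
    have "(x * P) $$ (i,j) = (\<Sum>k<N. x $$ (i,k) * P $$ (k,j))" by (rule mult_entry[OF x P ij])
    also have "\<dots> = (\<Sum>k<N. if k = j then x $$ (i,j) * of_real (gam N zl zr j) else 0)"
      using ij by (intro sum.cong) (auto simp: P_def proj_def gam_def)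
    also have "\<dots> = x $$ (i,j) * of_real (gam N zl zr j)" using ij by simp
    finally show ?thesis .
  qed
  have c1: "hmat N v * x \<in> carrier_mat N N" "x * hmat N v \<in> carrier_mat N N"
    "P * x \<in> carrier_mat N N" "x * P \<in> carrier_mat N N"
    using h x P by auto
  have "lop N v zl zr x $$ (i,j) = - \<i> * ((hmat N v * x) $$ (i,j) - (x * hmat N v) $$ (i,j))
      - ((P * x) $$ (i,j) + (x * P) $$ (i,j))"
  proof -
    have d: "dim_row x = N" "dim_col x = N" "dim_row P = N" "dim_col P = N"
      "dim_row (hmat N v) = N" "dim_col (hmat N v) = N" using x P h by auto
    show ?thesis unfolding lop_def Let_def P_def[symmetric] using ij d by simp
  qed
  then show ?thesis using e1 e2 e3 e4 by (simp add: algebra_simps)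
qed

lemma hsum:
  assumes "i < N"
  shows "(\<Sum>k<N. of_real (hh N v i k) * f k) =
    of_real (v (i+1)) * f i - (if 0 < i then f (i-1) else 0) - (if i+1 < N then f (i+1) else (0::complex))"
proof -
  have "(\<Sum>k<N. of_real (hh N v i k) * f k) =
     (\<Sum>k<N. (if k = i then of_real (v (i+1)) * f i else 0) + (if k = i - 1 \<and> 0 < i then - f k else 0)
          + (if k = i + 1 then - f k else 0))"
    by (intro sum.cong) (auto simp: hh_def)
  also have "\<dots> = (\<Sum>k<N. if k = i then of_real (v (i+1)) * f i else 0)
        + (\<Sum>k<N. if k = i - 1 \<and> 0 < i then - f k else 0) + (\<Sum>k<N. if k = i + 1 then - f k else 0)"
    by (simp add: sum.distrib)
  also have "(\<Sum>k<N. if k = i then of_real (v (i+1)) * f i else 0) = of_real (v (i+1)) * f i"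
    using assms by simp
  also have "(\<Sum>k<N. if k = i - 1 \<and> 0 < i then - f k else 0) = (if 0 < i then - f (i-1) else 0)"
    using assms by (cases "0 < i") auto
  also have "(\<Sum>k<N. if k = i + 1 then - f k else 0) = (if i+1 < N then - f (i+1) else 0)"
    by simp
  finally show ?thesis by simp
qed

lemma double_sum_real:
  fixes g :: "nat \<Rightarrow> nat \<Rightarrow> complex"
  assumes "\<And>i k. cnj (g i k) = g k i"
  shows "Im (\<Sum>i\<in>I. \<Sum>k\<in>I. g i k) = 0"
proof -
  define S where "S = (\<Sum>i\<in>I. \<Sum>k\<in>I. g i k)"
  have "cnj S = (\<Sum>i\<in>I. \<Sum>k\<in>I. g k i)"
    by (simp add: assms S_def)
  also have "\<dots> = S" unfolding S_def by (rule sum.swap)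
  finally have "cnj S = S" .
  then have "Im (cnj S) = Im S" by (simp only:)
  moreover have "Im (cnj S) = - Im S" by (rule cnj.sel(2))
  ultimately have "Im S = 0" by linarith
  then show ?thesis by (simp only: S_def)
qed

lemma re_pointwise:
  "Re (cnj a * (- \<i> * (p - q) - of_real r * a)) = Im (cnj a * p) - Im (cnj a * q) - r * cmod a ^ 2"
  using cmod_power2[of a] by (simp add: power2_eq_square algebra_simps)

lemma lop_fun_zero:
  fixes d :: "nat \<Rightarrow> nat \<Rightarrow> complex"
  assumes zl: "zl > 0" and zr: "zr \<ge> 0"
  and eq: "\<And>i j. i < N \<Longrightarrow> j < N \<Longrightarrow>
     - \<i> * ((\<Sum>k<N. of_real (hh N v i k) * d k j) - (\<Sum>k<N. d i k * of_real (hh N v k j)))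
     - of_real (gam N zl zr i + gam N zl zr j) * d i j = 0"
  shows "\<And>i j. i < N \<Longrightarrow> j < N \<Longrightarrow> d i j = 0"
proof -
  define g where "g = gam N zl zr"
  have gnn: "g i \<ge> 0" for i using zl zr by (simp add: g_def gam_def)
  have g0: "g 0 > 0" using zl zr by (simp add: g_def gam_def)
  define H1 where "H1 i j = (\<Sum>k<N. of_real (hh N v i k) * d k j)" for i j
  define H2 where "H2 i j = (\<Sum>k<N. d i k * of_real (hh N v k j))" for i j
  have eq': "- \<i> * (H1 i j - H2 i j) - of_real (g i + g j) * d i j = 0" if "i < N" "j < N" for i j
    using eq[OF that] unfolding H1_def H2_def g_def .
  have pw: "(g i + g j) * cmod (d i j) ^ 2 = Im (cnj (d i j) * H1 i j) - Im (cnj (d i j) * H2 i j)"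
    if "i < N" "j < N" for i j
  proof -
    have "Re (cnj (d i j) * (- \<i> * (H1 i j - H2 i j) - of_real (g i + g j) * d i j)) = 0"
      using eq'[OF that] by simp
    then show ?thesis unfolding re_pointwise by linarith
  qed
  define A where "A = (\<Sum>i<N. \<Sum>j<N. cnj (d i j) * H1 i j)"
  define B where "B = (\<Sum>i<N. \<Sum>j<N. cnj (d i j) * H2 i j)"
  have ImA: "Im A = 0"
  proof -
    have "A = (\<Sum>j<N. \<Sum>i<N. \<Sum>k<N. cnj (d i j) * of_real (hh N v i k) * d k j)"
      unfolding A_def H1_def by (subst sum.swap) (simp add: sum_distrib_left mult.assoc)
    then have "Im A = (\<Sum>j<N. Im (\<Sum>i<N. \<Sum>k<N. cnj (d i j) * of_real (hh N v i k) * d k j))"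
      by (simp only: Im_sum)
    also have "\<dots> = 0"
    proof (intro sum.neutral ballI double_sum_real)
      fix j i k
      show "cnj (cnj (d i j) * of_real (hh N v i k) * d k j) = cnj (d k j) * of_real (hh N v k i) * d i j"
        using hh_sym[of N v i k] by (simp add: mult_ac)
    qed
    finally show ?thesis .
  qed
  have ImB: "Im B = 0"
  proof -
    have "B = (\<Sum>i<N. \<Sum>j<N. \<Sum>k<N. cnj (d i j) * d i k * of_real (hh N v k j))"
      unfolding B_def H2_def by (simp add: sum_distrib_left mult.assoc)
    then have "Im B = (\<Sum>i<N. Im (\<Sum>j<N. \<Sum>k<N. cnj (d i j) * d i k * of_real (hh N v k j)))"
      by (simp only: Im_sum)
    also have "\<dots> = 0"
    proof (intro sum.neutral ballI double_sum_real)
      fix i j k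
      show "cnj (cnj (d i j) * d i k * of_real (hh N v k j)) = cnj (d i k) * d i j * of_real (hh N v j k)"
        using hh_sym[of N v k j] by (simp add: mult_ac)
    qed
    finally show ?thesis .
  qed
  define S where "S = (\<Sum>i<N. \<Sum>j<N. (g i + g j) * cmod (d i j) ^ 2)"
  have "S = (\<Sum>i<N. \<Sum>j<N. Im (cnj (d i j) * H1 i j) - Im (cnj (d i j) * H2 i j))"
    unfolding S_def by (intro sum.cong refl) (simp add: pw)
  also have "\<dots> = Im A - Im B"
    unfolding A_def B_def by (simp only: Im_sum sum_subtractf)
  finally have S0: "S = 0" using ImA ImB by simp
  have nn: "0 \<le> (g i + g j) * cmod (d i j) ^ 2" for i j using gnn[of i] gnn[of j] by simp
  have row0: "d 0 j = 0" if "j < N" for j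
  proof -
    have N0: "0 < N" using that by simp
    have "\<forall>i\<in>{..<N}. (\<Sum>j<N. (g i + g j) * cmod (d i j) ^ 2) = 0"
      using S0 unfolding S_def by (subst (asm) sum_nonneg_eq_0_iff) (auto intro: sum_nonneg nn)
    then have "(\<Sum>j<N. (g 0 + g j) * cmod (d 0 j) ^ 2) = 0" using N0 by auto
    then have "\<forall>j\<in>{..<N}. (g 0 + g j) * cmod (d 0 j) ^ 2 = 0"
      by (subst (asm) sum_nonneg_eq_0_iff) (auto intro: nn)
    then have "(g 0 + g j) * cmod (d 0 j) ^ 2 = 0" using that by auto
    moreover have "g 0 + g j > 0" using g0 gnn[of j] by linarith
    ultimately show ?thesis by simp
  qed
  have rows: "\<forall>j<N. d k j = 0" if "k < N" for k
    using that
  proof (induction k rule: less_induct)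
    case (less k)
    show ?case
    proof (cases k)
      case 0 then show ?thesis using row0 by simp
    next
      case (Suc m)
      have mN: "m < N" using less.prems Suc by simp
      have IHm: "\<forall>j<N. d m j = 0" using less.IH[of m] Suc mN by simp
      have IHm1: "\<forall>j<N. d (m - 1) j = 0" if "0 < m" using less.IH[of "m - 1"] Suc mN that by simp
      show ?thesis
      proof (intro allI impI)
        fix j assume j: "j < N"
        have h1: "H1 m j = - d k j"
        proof -
          have "H1 m j = of_real (v (m+1)) * d m j - (if 0 < m then d (m-1) j else 0)
                   - (if m+1 < N then d (m+1) j else 0)"
            unfolding H1_def by (rule hsum[OF mN])
          then show ?thesis using IHm IHm1 j less.prems Suc by auto
        qed
        have h2: "H2 m j = 0" unfolding H2_def using IHm by simp
        have "- \<i> * (H1 m j - H2 m j) - of_real (g m + g j) * d m j = 0" by (rule eq'[OF mN j])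
        then show "d k j = 0" using h1 h2 IHm j by simp
      qed
    qed
  qed
  fix i j assume "i < N" "j < N"
  then show "d i j = 0" using rows by blast
qed

lemma lop_unique:
  assumes zl: "zl > 0" and zr: "zr \<ge> 0"
    and x: "x \<in> carrier_mat N N" and y: "y \<in> carrier_mat N N"
    and eq: "lop N v zl zr x = lop N v zl zr y"
  shows "x = y"
proof -
  define d where "d i j = x $$ (i,j) - y $$ (i,j)" for i j
  have "d i j = 0" if "i < N" "j < N" for i j
  proof (rule lop_fun_zero[OF zl zr _ that])
    fix i j assume ij: "i < N" "j < N"
    have "lop N v zl zr x $$ (i,j) - lop N v zl zr y $$ (i,j) = 0" using eq by simp
    then show "- \<i> * ((\<Sum>k<N. of_real (hh N v i k) * d k j) - (\<Sum>k<N. d i k * of_real (hh N v k j)))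
     - of_real (gam N zl zr i + gam N zl zr j) * d i j = 0"
      unfolding lop_entry[OF x ij] lop_entry[OF y ij] d_def
      by (simp add: algebra_simps sum_subtractf)
  qed
  then show ?thesis using x y unfolding d_def by (intro eq_matI) auto
qed

lemma decay_from_asym:
  fixes f :: "complex \<Rightarrow> complex"
  assumes "((\<lambda>z. z * f z) \<longlongrightarrow> c) at_infinity"
  shows "\<exists>B R. B \<ge> 0 \<and> R > 0 \<and> (\<forall>x::real. R \<le> \<bar>x\<bar> \<longrightarrow> cmod (f (of_real x)) \<le> B / \<bar>x\<bar>)"
proof -
  have "eventually (\<lambda>z. dist (z * f z) c < 1) at_infinity"
    using tendstoD[OF assms] by simp
  then obtain b where b: "\<And>z. norm z \<ge> b \<Longrightarrow> dist (z * f z) c < 1"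
    unfolding eventually_at_infinity by blast
  define R where "R = max b 1"
  have "cmod (f (of_real x)) \<le> (norm c + 1) / \<bar>x\<bar>" if x: "R \<le> \<bar>x\<bar>" for x :: real
  proof -
    have x1: "1 \<le> \<bar>x\<bar>" using x by (simp add: R_def)
    then have x0: "\<bar>x\<bar> > 0" by linarith
    have "dist (of_real x * f (of_real x)) c < 1" using b[of "of_real x"] x by (simp add: R_def)
    then have "norm (of_real x * f (of_real x)) \<le> norm c + 1"
      using norm_triangle_ineq2[of "of_real x * f (of_real x)" c] by (simp add: dist_norm)
    then have "\<bar>x\<bar> * cmod (f (of_real x)) \<le> norm c + 1" by (simp add: norm_mult)
    then show ?thesis using x0 by (simp add: field_simps)
  qed
  then show ?thesis by (intro exI[of _ "norm c + 1"] exI[of _ R]) (auto simp: R_def)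
qed

lemma integrable_inv_sq: "integrable lborel (\<lambda>x::real. inverse (1 + x^2))"
proof -
  have "einterval (-\<infinity>) \<infinity> = (UNIV :: real set)" by (auto simp: einterval_iff)
  then show ?thesis using integrable_inverse_1_plus_square by (simp add: set_integrable_def)
qed

lemma integrable_decay_prod:
  fixes F G :: "real \<Rightarrow> complex"
  assumes cF: "continuous_on UNIV F" and cG: "continuous_on UNIV G"
    and dF: "B1 \<ge> 0" "R1 > 0" "\<And>x. R1 \<le> \<bar>x\<bar> \<Longrightarrow> cmod (F x) \<le> B1 / \<bar>x\<bar>"
    and dG: "B2 \<ge> 0" "R2 > 0" "\<And>x. R2 \<le> \<bar>x\<bar> \<Longrightarrow> cmod (G x) \<le> B2 / \<bar>x\<bar>"
  shows "integrable lborel (\<lambda>x. F x * G x)"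
proof -
  define R where "R = max (max R1 R2) 1"
  have cFG: "continuous_on UNIV (\<lambda>x. F x * G x)" using cF cG by (intro continuous_intros)
  have "compact ((\<lambda>x. F x * G x) ` {-R..R})"
    by (rule compact_continuous_image[OF continuous_on_subset[OF cFG]]) auto
  then have "bounded ((\<lambda>x. F x * G x) ` {-R..R})" by (rule compact_imp_bounded)
  then obtain M where M0: "M > 0" and M1: "\<forall>y\<in>(\<lambda>x. F x * G x) ` {-R..R}. norm y \<le> M"
    unfolding bounded_pos by blast
  have M: "M > 0" "\<And>x. x \<in> {-R..R} \<Longrightarrow> cmod (F x * G x) \<le> M" using M0 M1 by auto
  define K where "K = max (M * (1 + R^2)) (2 * B1 * B2)"
  have bound: "cmod (F x * G x) \<le> K * inverse (1 + x^2)" for x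
  proof (cases "\<bar>x\<bar> \<le> R")
    case True
    then have "cmod (F x * G x) \<le> M" using M(2)[of x] by (simp add: abs_le_iff)
    also have "M \<le> M * (1 + R^2) * inverse (1 + x^2)"
    proof -
      have "\<bar>x\<bar>^2 \<le> R^2" using True by (intro power_mono) auto
      then have "x^2 \<le> R^2" by simp
      then have "(1 + x^2) \<le> 1 + R^2" by simp
      then have "M * (1 + x^2) \<le> M * (1 + R^2)" using M by simp
      then show ?thesis by (simp add: field_simps add_pos_nonneg)
    qed
    also have "\<dots> \<le> K * inverse (1 + x^2)"
      by (intro mult_right_mono) (auto simp: K_def)
    finally show ?thesis .
  next
    case False
    then have x: "R1 \<le> \<bar>x\<bar>" "R2 \<le> \<bar>x\<bar>" "1 \<le> \<bar>x\<bar>" by (auto simp: R_def)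
    have "cmod (F x * G x) = cmod (F x) * cmod (G x)" by (simp add: norm_mult)
    also have "\<dots> \<le> (B1 / \<bar>x\<bar>) * (B2 / \<bar>x\<bar>)"
      using dF(3)[OF x(1)] dG(3)[OF x(2)] dF(1) by (intro mult_mono) auto
    also have "\<dots> = B1 * B2 / x^2" by (simp add: power2_eq_square)
    also have "\<dots> \<le> 2 * B1 * B2 * inverse (1 + x^2)"
    proof -
      have "1^2 \<le> \<bar>x\<bar>^2" using x(3) by (intro power_mono) auto
      then have "1 + x^2 \<le> 2 * x^2" by simp
      then have "B1 * B2 * (1 + x^2) \<le> B1 * B2 * (2 * x^2)" using dF(1) dG(1) by (intro mult_left_mono) auto
      moreover have "x^2 > 0" using x(3) by simp
      ultimately show ?thesis by (simp add: field_simps add_pos_nonneg)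
    qed
    also have "\<dots> \<le> K * inverse (1 + x^2)"
      by (intro mult_right_mono) (auto simp: K_def)
    finally show ?thesis .
  qed
  show ?thesis
  proof (rule Bochner_Integration.integrable_bound[where f="\<lambda>x. K * inverse (1 + x^2)"])
    show "integrable lborel (\<lambda>x. K * inverse (1 + x^2))"
      using integrable_inv_sq by simp
    show "(\<lambda>x. F x * G x) \<in> borel_measurable lborel"
      using borel_measurable_continuous_onI[OF cFG] by simp
    show "AE x in lborel. norm (F x * G x) \<le> norm (K * inverse (1 + x^2))"
    proof (rule AE_I2)
      fix x :: real
      have "K \<ge> M * (1 + R^2)" by (simp add: K_def)
      moreover have "M * (1 + R^2) > 0" using M(1) by (simp add: add_pos_nonneg)
      ultimately have "K \<ge> 0" by linarith
      then show "norm (F x * G x) \<le> norm (K * inverse (1 + x^2))"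
        using bound[of x] by (simp add: abs_mult add_pos_nonneg)
    qed
  qed
qed

locale sys =
  fixes v :: "nat \<Rightarrow> real" and N :: nat and zl zr :: real
  assumes N2: "N \<ge> 2" and zl: "zl > 0" and zr: "zr > 0"
begin

abbreviation "u \<equiv> vtilde v N zl zr"

lemma u_im1: "Im (u 1) < 0" using zl by (simp add: vtilde_def)
lemma u_im: "Im (u s) \<le> 0" using zl zr by (simp add: vtilde_def)

lemma D_nz: "Im z \<ge> 0 \<Longrightarrow> wseq u z (Suc N) \<noteq> 0"
  by (rule wseq_nonzero[of "vtilde v N zl zr"]) (use u_im1 u_im N2 in auto)

lemma phi_eta: "phi u N j = (\<lambda>z. wseq u z j / wseq u z (Suc N))"
  by (rule ext) (simp add: phi_def)

lemma phi_cont: "continuous_on {z. Im z \<ge> 0} (phi u N j)"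
  unfolding phi_eta by (intro continuous_on_divide wseq_cont) (auto simp: D_nz)

lemma phi_diff: "Im z \<ge> 0 \<Longrightarrow> phi u N j field_differentiable at z"
  unfolding phi_eta
  by (intro field_differentiable_divide holomorphic_on_imp_differentiable_at[OF wseq_holo]) (auto simp: D_nz)

definition ph :: "nat \<Rightarrow> real \<Rightarrow> complex" where
  "ph i E = phi u N (Suc i) (of_real E)"

lemma ph_eta: "ph i = (\<lambda>x. phi u N (Suc i) (of_real x))"
  by (rule ext) (simp add: ph_def)

lemma ph_cont: "continuous_on UNIV (ph i)"
  unfolding ph_eta
  by (rule continuous_on_compose2[OF phi_cont]) (auto intro: continuous_intros)

lemma ph_cnj_cont: "continuous_on UNIV (\<lambda>x. cnj (ph i x))"
  using ph_cont by (intro continuous_intros)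

lemma ph_PV:
  assumes "i < N"
  shows "((\<lambda>L. integral {-L..L} (ph i)) \<longlongrightarrow> - (\<i> * pi * (if Suc i = N then -1 else 0))) at_top"
  unfolding ph_eta by (rule PV_limit[OF phi_cont phi_diff phi_asym[OF assms]])

lemma ph_decay:
  assumes "i < N"
  shows "\<exists>B R. B \<ge> 0 \<and> R > 0 \<and> (\<forall>x. R \<le> \<bar>x\<bar> \<longrightarrow> cmod (ph i x) \<le> B / \<bar>x\<bar>)"
  using decay_from_asym[OF phi_asym[OF assms, of u]] unfolding ph_def by simp

lemma int_pp:
  assumes "i < N" "j < N"
  shows "integrable lborel (\<lambda>E. ph i E * cnj (ph j E))"
proof -
  obtain B1 R1 where 1: "B1 \<ge> 0" "R1 > 0" "\<And>x. R1 \<le> \<bar>x\<bar> \<Longrightarrow> cmod (ph i x) \<le> B1 / \<bar>x\<bar>"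
    using ph_decay[OF assms(1)] by blast
  obtain B2 R2 where 2: "B2 \<ge> 0" "R2 > 0" "\<And>x. R2 \<le> \<bar>x\<bar> \<Longrightarrow> cmod (ph j x) \<le> B2 / \<bar>x\<bar>"
    using ph_decay[OF assms(2)] by blast
  show ?thesis
    by (rule integrable_decay_prod[OF ph_cont ph_cnj_cont 1]) (use 2 in auto)
qed

lemma u_gam: "i < N \<Longrightarrow> u (Suc i) = of_real (v (Suc i)) - \<i> * of_real (gam N zl zr i)"
  using N2 by (auto simp: vtilde_def gam_def)

lemma ph_rec:
  assumes i: "i < N"
  shows "(\<Sum>k<N. of_real (hh N v i k) * ph k E) =
     (of_real E + \<i> * of_real (gam N zl zr i)) * ph i E + (if i + 1 = N then 1 else 0)"
proof -
  define z where "z = complex_of_real E"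
  define Dz where "Dz = wseq u z (Suc N)"
  have Dz: "Dz \<noteq> 0" unfolding Dz_def z_def by (rule D_nz) simp
  define P where "P k = wseq u z (Suc k) / Dz" for k
  have phP: "ph k E = P k" for k by (simp add: ph_def phi_def P_def Dz_def z_def)
  define g where "g = gam N zl zr i"
  define Q where "Q = wseq u z i / Dz"
  have Q: "Q = (if 0 < i then P (i - 1) else 0)"
    by (cases i) (auto simp: Q_def P_def)
  have rec0: "wseq u z (Suc (Suc i)) = (u (Suc i) - z) * wseq u z (Suc i) - wseq u z i" by simp
  then have rec1: "wseq u z (Suc (Suc i)) = (of_real (v (Suc i)) - \<i> * of_real g - z) * wseq u z (Suc i) - wseq u z i"
    by (simp only: u_gam[OF i] g_def)
  have alg: "c / Dz = (V - \<i> * G - z) * (b / Dz) - a / Dz"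
    if "c = (V - \<i> * G - z) * b - a" for a b c V G
    using that by (simp add: diff_divide_distrib)
  have rec: "P (Suc i) = (of_real (v (Suc i)) - \<i> * of_real g - z) * P i - Q"
    unfolding P_def Q_def by (rule alg[OF rec1])
  have PN: "P N = 1" using Dz by (simp add: P_def Dz_def)
  have "(\<Sum>k<N. of_real (hh N v i k) * ph k E) =
     of_real (v (i+1)) * P i - (if 0 < i then P (i-1) else 0) - (if i+1 < N then P (i+1) else 0)"
    unfolding phP by (rule hsum[OF i])
  also have "\<dots> = (z + \<i> * of_real g) * P i + (if i + 1 = N then 1 else 0)"
  proof (cases "i + 1 < N")
    case True
    then show ?thesis using rec Q by (simp add: algebra_simps)
  next
    case False
    then have "i + 1 = N" using i by simp
    then show ?thesis using rec Q PN by (simp add: algebra_simps)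
  qed
  finally show ?thesis by (simp add: phP z_def g_def)
qed

definition xm :: "complex Matrix.mat" where
  "xm = Matrix.mat N N (\<lambda>(i,j). complex_of_real (-1/(2*pi)) * (LINT E|lborel. ph i E * cnj (ph j E)))"

lemma xm_carrier: "xm \<in> carrier_mat N N" by (simp add: xm_def)

lemma xm_entry: "i < N \<Longrightarrow> j < N \<Longrightarrow>
  xm $$ (i,j) = complex_of_real (-1/(2*pi)) * (LINT E|lborel. ph i E * cnj (ph j E))"
  by (simp add: xm_def)

lemma alg_G:
  fixes p q a b :: complex and E gi gj :: real
  shows "- \<i> * (((of_real E + \<i> * of_real gi) * p + b) * cnj q - p * cnj ((of_real E + \<i> * of_real gj) * q + a))
     - of_real (gi + gj) * (p * cnj q) = \<i> * (cnj a * p - b * cnj q)"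
  by (simp add: complex_eq_iff algebra_simps)

lemma G_point:
  assumes i: "i < N" and j: "j < N"
  shows "- \<i> * ((\<Sum>k<N. of_real (hh N v i k) * (ph k E * cnj (ph j E)))
            - (\<Sum>k<N. (ph i E * cnj (ph k E)) * of_real (hh N v k j)))
         - of_real (gam N zl zr i + gam N zl zr j) * (ph i E * cnj (ph j E))
       = \<i> * ((if j + 1 = N then 1 else 0) * ph i E - (if i + 1 = N then 1 else 0) * cnj (ph j E))"
proof -
  have s1: "(\<Sum>k<N. of_real (hh N v i k) * (ph k E * cnj (ph j E)))
      = ((of_real E + \<i> * of_real (gam N zl zr i)) * ph i E + (if i + 1 = N then 1 else 0)) * cnj (ph j E)"
  proof -
    have "(\<Sum>k<N. of_real (hh N v i k) * (ph k E * cnj (ph j E)))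
        = (\<Sum>k<N. of_real (hh N v i k) * ph k E) * cnj (ph j E)"
      by (simp add: sum_distrib_right mult.assoc)
    then show ?thesis by (simp only: ph_rec[OF i])
  qed
  have s2: "(\<Sum>k<N. (ph i E * cnj (ph k E)) * of_real (hh N v k j))
      = ph i E * cnj ((of_real E + \<i> * of_real (gam N zl zr j)) * ph j E + (if j + 1 = N then 1 else 0))"
  proof -
    have "cnj (\<Sum>k<N. of_real (hh N v j k) * ph k E) = (\<Sum>k<N. cnj (ph k E) * of_real (hh N v k j))"
      by (simp add: cnj_sum mult.commute hh_sym[of N v j])
    then have "(\<Sum>k<N. (ph i E * cnj (ph k E)) * of_real (hh N v k j))
        = ph i E * cnj (\<Sum>k<N. of_real (hh N v j k) * ph k E)"
      by (simp add: sum_distrib_left mult.assoc)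
    then show ?thesis by (simp only: ph_rec[OF j])
  qed
  show ?thesis unfolding s1 s2 alg_G by simp
qed

lemma int_S1: assumes "i < N" "j < N" shows
   "integrable lborel (\<lambda>E. \<Sum>k<N. of_real (hh N v i k) * (ph k E * cnj (ph j E)))"
proof (rule Bochner_Integration.integrable_sum)
  fix k assume "k \<in> {..<N}"
  then show "integrable lborel (\<lambda>E. of_real (hh N v i k) * (ph k E * cnj (ph j E)))"
    using int_pp[of k j] assms by (intro integrable_mult_right) auto
qed

lemma int_S2: assumes "i < N" "j < N" shows
   "integrable lborel (\<lambda>E. \<Sum>k<N. (ph i E * cnj (ph k E)) * of_real (hh N v k j))"
proof (rule Bochner_Integration.integrable_sum)
  fix k assume "k \<in> {..<N}"
  then show "integrable lborel (\<lambda>E. (ph i E * cnj (ph k E)) * of_real (hh N v k j))"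
    using int_pp[of i k] assms by (intro integrable_mult_left) auto
qed

lemma PV_G:
  assumes i: "i < N" and j: "j < N"
  defines "a \<equiv> (if j + 1 = N then 1 else 0 :: complex)" and "b \<equiv> (if i + 1 = N then 1 else 0 :: complex)"
  shows "((\<lambda>L. integral {-L..L} (\<lambda>E. \<i> * (a * ph i E - b * cnj (ph j E))))
      \<longlongrightarrow> complex_of_real (- 2 * pi) * (if i = N - 1 \<and> j = N - 1 then 1 else 0)) at_top"
proof -
  have ii: "ph k integrable_on {-L..L}" for k L
    by (rule integrable_continuous_interval[OF continuous_on_subset[OF ph_cont]]) auto
  have ic: "(\<lambda>x. cnj (ph k x)) integrable_on {-L..L}" for k L
    by (rule integrable_continuous_interval[OF continuous_on_subset[OF ph_cnj_cont]]) auto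
  have eq: "integral {-L..L} (\<lambda>E. \<i> * (a * ph i E - b * cnj (ph j E)))
      = \<i> * (a * integral {-L..L} (ph i) - b * cnj (integral {-L..L} (ph j)))" for L
  proof -
    have "integral {-L..L} (\<lambda>E. a * ph i E - b * cnj (ph j E))
        = integral {-L..L} (\<lambda>E. a * ph i E) - integral {-L..L} (\<lambda>E. b * cnj (ph j E))"
      by (rule integral_diff) (auto intro: integrable_on_mult_right ii ic)
    also have "\<dots> = a * integral {-L..L} (ph i) - b * cnj (integral {-L..L} (ph j))"
      by (simp add: Henstock_Kurzweil_Integration.integral_cnj)
    finally show ?thesis by simp
  qed
  have lim: "((\<lambda>L. \<i> * (a * integral {-L..L} (ph i) - b * cnj (integral {-L..L} (ph j))))
     \<longlongrightarrow> \<i> * (a * (- (\<i> * pi * (if Suc i = N then -1 else 0))) - b * cnj (- (\<i> * pi * (if Suc j = N then -1 else 0))))) at_top"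
    by (intro tendsto_intros ph_PV i j)
  have val: "\<i> * (a * (- (\<i> * pi * (if Suc i = N then -1 else 0))) - b * cnj (- (\<i> * pi * (if Suc j = N then -1 else 0))))
      = complex_of_real (- 2 * pi) * (if i = N - 1 \<and> j = N - 1 then 1 else 0)"
  proof -
    have ei: "(Suc i = N) = (i = N - 1)" and ej: "(Suc j = N) = (j = N - 1)" using i j by auto
    show ?thesis unfolding a_def b_def Suc_eq_plus1[symmetric] ei ej
      by (cases "i = N - 1"; cases "j = N - 1") (simp_all add: algebra_simps)
  qed
  show ?thesis using lim unfolding eq val .
qed

end

context sys begin

lemma lop_dims: "dim_row (lop N v zl zr x) = dim_row x" "dim_col (lop N v zl zr x) = N"
  by (simp_all add: lop_def Let_def proj_def)

lemma lop_xm: "lop N v zl zr xm = proj N N"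
proof (rule eq_matI)
  show "dim_row (lop N v zl zr xm) = dim_row (proj N N)" "dim_col (lop N v zl zr xm) = dim_col (proj N N)"
    by (simp_all add: lop_dims xm_def proj_def)
  fix i j assume "i < dim_row (proj N N)" "j < dim_col (proj N N)"
  then have i: "i < N" and j: "j < N" by (simp_all add: proj_def)
  define c where "c = complex_of_real (-1/(2*pi))"
  define S1 where "S1 E = (\<Sum>k<N. of_real (hh N v i k) * (ph k E * cnj (ph j E)))" for E
  define S2 where "S2 E = (\<Sum>k<N. (ph i E * cnj (ph k E)) * of_real (hh N v k j))" for E
  define S3 where "S3 E = ph i E * cnj (ph j E)" for E
  define g where "g = gam N zl zr i + gam N zl zr j"
  have I1: "integrable lborel S1" unfolding S1_def by (rule int_S1[OF i j])
  have I2: "integrable lborel S2" unfolding S2_def by (rule int_S2[OF i j])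
  have I3: "integrable lborel S3" unfolding S3_def by (rule int_pp[OF i j])
  have e1: "(\<Sum>k<N. of_real (hh N v i k) * xm $$ (k,j)) = c * integral\<^sup>L lborel S1"
  proof -
    have "integral\<^sup>L lborel S1 = (\<Sum>k<N. LINT E|lborel. of_real (hh N v i k) * (ph k E * cnj (ph j E)))"
      unfolding S1_def
    proof (rule Bochner_Integration.integral_sum)
      fix k assume "k \<in> {..<N}"
      then show "integrable lborel (\<lambda>E. of_real (hh N v i k) * (ph k E * cnj (ph j E)))"
        using int_pp[of k j] j by (intro integrable_mult_right) auto
    qed
    also have "\<dots> = (\<Sum>k<N. of_real (hh N v i k) * (LINT E|lborel. ph k E * cnj (ph j E)))"
      by simp
    finally have "c * integral\<^sup>L lborel S1 = (\<Sum>k<N. c * (of_real (hh N v i k) * (LINT E|lborel. ph k E * cnj (ph j E))))"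
      by (simp add: sum_distrib_left)
    also have "\<dots> = (\<Sum>k<N. of_real (hh N v i k) * xm $$ (k,j))"
      by (intro sum.cong refl) (simp add: xm_entry j c_def)
    finally show ?thesis by simp
  qed
  have e2: "(\<Sum>k<N. xm $$ (i,k) * of_real (hh N v k j)) = c * integral\<^sup>L lborel S2"
  proof -
    have "integral\<^sup>L lborel S2 = (\<Sum>k<N. LINT E|lborel. (ph i E * cnj (ph k E)) * of_real (hh N v k j))"
      unfolding S2_def
    proof (rule Bochner_Integration.integral_sum)
      fix k assume "k \<in> {..<N}"
      then show "integrable lborel (\<lambda>E. (ph i E * cnj (ph k E)) * of_real (hh N v k j))"
        using int_pp[of i k] i by (intro integrable_mult_left) auto
    qed
    also have "\<dots> = (\<Sum>k<N. (LINT E|lborel. ph i E * cnj (ph k E)) * of_real (hh N v k j))"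
      by simp
    finally have "c * integral\<^sup>L lborel S2 = (\<Sum>k<N. c * ((LINT E|lborel. ph i E * cnj (ph k E)) * of_real (hh N v k j)))"
      by (simp add: sum_distrib_left)
    also have "\<dots> = (\<Sum>k<N. xm $$ (i,k) * of_real (hh N v k j))"
      by (intro sum.cong refl) (simp add: xm_entry i c_def)
    finally show ?thesis by simp
  qed
  have e3: "xm $$ (i,j) = c * integral\<^sup>L lborel S3"
    unfolding S3_def c_def using xm_entry[OF i j] by simp
  define G where "G E = - \<i> * (S1 E - S2 E) - of_real g * S3 E" for E
  have LG: "integral\<^sup>L lborel G = - \<i> * (integral\<^sup>L lborel S1 - integral\<^sup>L lborel S2) - of_real g * integral\<^sup>L lborel S3"
    unfolding G_def using I1 I2 I3 by simp
  have lhs: "lop N v zl zr xm $$ (i,j) = c * integral\<^sup>L lborel G"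
    unfolding lop_entry[OF xm_carrier i j] e1 e2 e3 LG g_def by (simp add: algebra_simps)
  define a where "a = (if j + 1 = N then 1 else 0 :: complex)"
  define b where "b = (if i + 1 = N then 1 else 0 :: complex)"
  have GG: "G = (\<lambda>E. \<i> * (a * ph i E - b * cnj (ph j E)))"
    by (rule ext) (simp only: G_def S1_def S2_def S3_def g_def a_def b_def G_point[OF i j])
  have IG: "integrable lborel G" unfolding G_def using I1 I2 I3 by simp
  have "integral\<^sup>L lborel G = complex_of_real (- 2 * pi) * (if i = N - 1 \<and> j = N - 1 then 1 else 0)"
    using LINT_eq_PV_limit[OF IG[unfolded GG] PV_G[OF i j, folded a_def b_def]] unfolding GG .
  then have "lop N v zl zr xm $$ (i,j) = c * complex_of_real (- 2 * pi) * (if i = N - 1 \<and> j = N - 1 then 1 else 0)"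
    using lhs by simp
  also have "c * complex_of_real (- 2 * pi) = 1"
    unfolding c_def by (simp flip: of_real_mult)
  finally show "lop N v zl zr xm $$ (i,j) = proj N N $$ (i,j)"
    using i j by (simp add: proj_def)
qed

lemma lopinv: "lop_inv N v zl zr (proj N N) = xm"
  unfolding lop_inv_def
proof (rule the_equality)
  show "xm \<in> carrier_mat N N \<and> lop N v zl zr xm = proj N N" using xm_carrier lop_xm by simp
  fix x assume "x \<in> carrier_mat N N \<and> lop N v zl zr x = proj N N"
  then show "x = xm"
    using lop_unique[OF zl less_imp_le[OF zr], of x N xm v] xm_carrier lop_xm by simp
qed

lemma int_f0: "integrable lborel (\<lambda>E. (cmod (ph 0 E))^2)"
proof -
  have "integrable lborel (\<lambda>E. norm (ph 0 E * cnj (ph 0 E)))"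
    using int_pp[of 0 0] N2 by (intro integrable_norm) auto
  then show ?thesis by (simp add: complex_mod_mult_cnj)
qed

lemma q_formula:
  "- (lop_inv N v zl zr (proj N N) $$ (0,0)) = complex_of_real (1/(2*pi) * (LINT E|lborel. (cmod (ph 0 E))^2))"
proof -
  have N0: "0 < N" using N2 by simp
  have "(\<lambda>E. ph 0 E * cnj (ph 0 E)) = (\<lambda>E. complex_of_real ((cmod (ph 0 E))^2))"
    by (rule ext) (rule complex_norm_square[symmetric])
  then have "- (lop_inv N v zl zr (proj N N) $$ (0,0)) =
     - (complex_of_real (-1/(2*pi)) * complex_of_real (LINT E|lborel. (cmod (ph 0 E))^2))"
    unfolding lopinv xm_entry[OF N0 N0] by (simp only: integral_complex_of_real)
  also have "\<dots> = complex_of_real (- ((-1/(2*pi)) * (LINT E|lborel. (cmod (ph 0 E))^2)))"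
    by (simp only: of_real_mult of_real_minus)
  also have "\<dots> = complex_of_real (1/(2*pi) * (LINT E|lborel. (cmod (ph 0 E))^2))"
    by simp
  finally show ?thesis .
qed

lemma ph0: "ph 0 E = 1 / wseq u (of_real E) (Suc N)"
  by (simp add: ph_def phi_def)

end

lemma Ttrans_entry_cont: "continuous_on UNIV (\<lambda>E. Ttrans u n E $ i $ j)"
proof (induction n arbitrary: i j)
  case 0 then show ?case by (simp add: continuous_on_const)
next
  case (Suc n)
  have eq1: "(\<lambda>E. Ttrans u (Suc n) E $ i $ j) =
     (\<lambda>E. Astep u (Suc n) E $ i $ 1 * Ttrans u n E $ 1 $ j + Astep u (Suc n) E $ i $ 2 * Ttrans u n E $ 2 $ j)"
    by (rule ext) (simp add: matrix_matrix_mult_def sum_2)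
  have A: "continuous_on UNIV (\<lambda>E. Astep u (Suc n) E $ i $ k)" for k
  proof -
    have eq: "(\<lambda>E. Astep u (Suc n) E $ i $ k) = (\<lambda>E. if i = 1 then (if k = 1 then u (Suc n) - of_real E else -1)
          else (if k = 1 then 1 else 0))"
      by (rule ext) (simp add: Astep_def mat2_def)
    show ?thesis unfolding eq by (cases "i = 1"; cases "k = 1") (auto intro!: continuous_intros)
  qed
  show ?case unfolding eq1 by (rule continuous_on_add continuous_on_mult A Suc.IH)+
qed

lemma Ttrans_cont: "continuous_on UNIV (\<lambda>E. Ttrans u n E)"
proof -
  have eq: "(\<lambda>E. Ttrans u n E) = (\<lambda>E. \<chi> i. \<chi> j. Ttrans u n E $ i $ j)" by (simp add: vec_lambda_eta)
  show ?thesis by (subst eq) (intro continuous_on_vec_lambda Ttrans_entry_cont)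
qed

lemma opnorm_le_norm: fixes M :: "complex^2^2" shows "opnorm M \<le> 4 * norm M"
proof -
  have e: "cmod (M $ i $ j) \<le> norm M" for i j
    using Finite_Cartesian_Product.norm_nth_le[of "M $ i" j] Finite_Cartesian_Product.norm_nth_le[of M i]
    by linarith
  show ?thesis using opnorm_le_sum[of M] e[of 1 1] e[of 1 2] e[of 2 1] e[of 2 2] by linarith
qed

lemma opnorm_lip: fixes A B :: "complex^2^2" shows "opnorm A \<le> opnorm B + 4 * norm (A - B)"
proof -
  have "(*v) A = (\<lambda>x. (A - B) *v x + B *v x)" by (rule ext) (simp add: matrix_vector_mult_diff_rdistrib)
  then have "opnorm A \<le> opnorm (A - B) + opnorm B"
    unfolding opnorm_def using onorm_triangle[OF matrix_vector_mul_bounded_linear matrix_vector_mul_bounded_linear]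
    by metis
  then show ?thesis using opnorm_le_norm[of "A - B"] by linarith
qed

lemma opnorm_cont: "continuous_on UNIV opnorm"
  unfolding continuous_on_iff
proof (intro ballI allI impI)
  fix A :: "complex^2^2" and e :: real assume e: "e > 0"
  show "\<exists>d>0. \<forall>A'\<in>UNIV. dist A' A < d \<longrightarrow> dist (opnorm A') (opnorm A) < e"
  proof (intro exI[of _ "e/4"] conjI ballI impI)
    show "e/4 > 0" using e by simp
    fix A' assume "dist A' A < e/4"
    then have d: "norm (A' - A) < e/4" by (simp add: dist_norm)
    have "opnorm A' \<le> opnorm A + 4 * norm (A' - A)" by (rule opnorm_lip)
    moreover have "opnorm A \<le> opnorm A' + 4 * norm (A - A')" by (rule opnorm_lip)
    moreover have "norm (A - A') = norm (A' - A)" by (rule norm_minus_commute)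
    ultimately show "dist (opnorm A') (opnorm A) < e" using d by (simp add: dist_real_def abs_if)
  qed
qed

lemma main_N:
  fixes v :: "nat \<Rightarrow> real"
  assumes N: "N \<ge> 2" and zl: "zl > 0" and zr: "zr > 0"
  shows "let I = (LINT E|lborel. 1 / (opnorm (Ttrans (\<lambda>n. of_real (v n)) N E))\<^sup>2);
             q = - (lop_inv N v zl zr (proj N N) $$ (0, 0))
         in Im q = 0 \<and> 1/(8*pi*Ku zl zr) * I \<le> Re q \<and> Re q \<le> 2/(pi*Kl zl zr) * I"
proof -
  interpret sys v N zl zr using assms by unfold_locales
  define T where "T E = Ttrans (\<lambda>n. of_real (v n)) N E" for E
  define D where "D E = wseq u (of_real E) (Suc N)" for E
  define f0 where "f0 E = (cmod (ph 0 E))^2" for E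
  define g where "g E = 1 / (opnorm (T E))^2" for E
  define Kl' where "Kl' = Kl zl zr"
  define Ku' where "Ku' = Ku zl zr"
  have Klp: "Kl' > 0" unfolding Kl'_def by (rule Kl_pos[OF zl zr])
  have Kup: "Ku' > 0" unfolding Ku'_def by (rule Ku_pos[OF zl zr])
  have Db: "opnorm (T E) > 0" "Kl' / 4 * opnorm (T E) ^ 2 \<le> cmod (D E) ^ 2"
     "cmod (D E) ^ 2 \<le> 4 * Ku' * opnorm (T E) ^ 2" for E
    using D_bounds[OF N zl zr, of v E] unfolding T_def D_def Kl'_def Ku'_def by auto
  have f0D: "f0 E = 1 / cmod (D E) ^ 2" for E
    by (simp add: f0_def ph0 D_def norm_divide power_one_over)
  have Dp: "cmod (D E) ^ 2 > 0" for E
  proof -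
    have "opnorm (T E) ^ 2 > 0" using Db(1)[of E] by simp
    then have "Kl' / 4 * opnorm (T E) ^ 2 > 0" using Klp by simp
    then show ?thesis using Db(2)[of E] by linarith
  qed
  have g_le: "g E \<le> 4 * Ku' * f0 E" for E
  proof -
    have o: "opnorm (T E) ^ 2 > 0" using Db(1)[of E] by simp
    have "1 / opnorm (T E) ^ 2 \<le> 4 * Ku' / cmod (D E) ^ 2"
      using Db(3)[of E] o Dp[of E] by (simp add: divide_simps mult.commute)
    then show ?thesis by (simp add: g_def f0D)
  qed
  have f0_le: "f0 E \<le> 4 / Kl' * g E" for E
  proof -
    have o: "opnorm (T E) ^ 2 > 0" using Db(1)[of E] by simp
    have "1 / cmod (D E) ^ 2 \<le> 4 / (Kl' * opnorm (T E) ^ 2)"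
      using Db(2)[of E] o Dp[of E] Klp by (simp add: divide_simps mult.commute)
    then show ?thesis by (simp add: g_def f0D)
  qed
  have g_nn: "g E \<ge> 0" for E by (simp add: g_def)
  have f0_nn: "f0 E \<ge> 0" for E by (simp add: f0_def)
  have int0: "integrable lborel f0" unfolding f0_def by (rule int_f0)
  have cT: "continuous_on UNIV (\<lambda>E. opnorm (T E))"
    unfolding T_def by (rule continuous_on_compose2[OF opnorm_cont Ttrans_cont]) auto
  have cg: "continuous_on UNIV g"
  proof -
    have nz: "opnorm (T E) \<noteq> 0" for E using Db(1)[of E] by simp
    show ?thesis unfolding g_def by (intro continuous_intros cT) (auto simp: nz)
  qed
  have intg: "integrable lborel g"
  proof (rule Bochner_Integration.integrable_bound[where f = "\<lambda>E. 4 * Ku' * f0 E"])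
    show "integrable lborel (\<lambda>E. 4 * Ku' * f0 E)" using int0 by simp
    show "g \<in> borel_measurable lborel" using borel_measurable_continuous_onI[OF cg] by simp
    show "AE x in lborel. norm (g x) \<le> norm (4 * Ku' * f0 x)"
      using g_le g_nn f0_nn Kup by (intro AE_I2) simp
  qed
  have q: "- (lop_inv N v zl zr (proj N N) $$ (0, 0)) = complex_of_real (1/(2*pi) * integral\<^sup>L lborel f0)"
    using q_formula unfolding f0_def .
  have Ieq: "(LINT E|lborel. 1 / (opnorm (Ttrans (\<lambda>n. of_real (v n)) N E))\<^sup>2) = integral\<^sup>L lborel g"
  proof -
    have "g = (\<lambda>E. 1 / (opnorm (Ttrans (\<lambda>n. of_real (v n)) N E))\<^sup>2)"
      by (rule ext) (simp add: g_def T_def)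
    then show ?thesis by simp
  qed
  have m1: "integral\<^sup>L lborel g \<le> 4 * Ku' * integral\<^sup>L lborel f0"
  proof -
    have "integral\<^sup>L lborel g \<le> (LINT E|lborel. 4 * Ku' * f0 E)"
      using intg int0 g_le by (intro integral_mono) auto
    then show ?thesis by simp
  qed
  have m2: "integral\<^sup>L lborel f0 \<le> 4 / Kl' * integral\<^sup>L lborel g"
  proof -
    have "integral\<^sup>L lborel f0 \<le> (LINT E|lborel. 4 / Kl' * g E)"
      using intg int0 f0_le by (intro integral_mono) auto
    then show ?thesis by simp
  qed
  have r1: "1/(8*pi*Ku') * integral\<^sup>L lborel g \<le> 1/(2*pi) * integral\<^sup>L lborel f0"
  proof -
    have "1/(8*pi*Ku') * integral\<^sup>L lborel g \<le> 1/(8*pi*Ku') * (4 * Ku' * integral\<^sup>L lborel f0)"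
      using m1 Kup by (intro mult_left_mono) auto
    also have "\<dots> = 1/(2*pi) * integral\<^sup>L lborel f0" using Kup by (simp add: field_simps)
    finally show ?thesis .
  qed
  have r2: "1/(2*pi) * integral\<^sup>L lborel f0 \<le> 2/(pi*Kl') * integral\<^sup>L lborel g"
  proof -
    have "1/(2*pi) * integral\<^sup>L lborel f0 \<le> 1/(2*pi) * (4 / Kl' * integral\<^sup>L lborel g)"
      using m2 by (intro mult_left_mono) auto
    also have "\<dots> = 2/(pi*Kl') * integral\<^sup>L lborel g" using Klp by (simp add: field_simps)
    finally show ?thesis .
  qed
  show ?thesis unfolding Let_def Ieq q using r1 r2 by (simp add: Kl'_def Ku'_def)
qed

theorem mainTheorem7:
  fixes zl zr :: real
  assumes "zl \<ge> 0" and "zr \<ge> 0"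
  shows "(\<exists>a b. a > 0 \<and> b > 0 \<and>
            (\<forall>(v :: nat \<Rightarrow> real) N (E :: real). bounded (range v) \<and> N \<ge> 2 \<longrightarrow>
               a * opnorm (Ttrans (\<lambda>n. of_real (v n)) N E) \<le> opnorm (Ttrans (vtilde v N zl zr) N E) \<and>
               opnorm (Ttrans (vtilde v N zl zr) N E) \<le> b * opnorm (Ttrans (\<lambda>n. of_real (v n)) N E)))
       \<and> (zl > 0 \<and> zr > 0 \<longrightarrow>
            (\<forall>v :: nat \<Rightarrow> real. bounded (range v) \<longrightarrow>
              (\<exists>c1 c2. c1 > 0 \<and> c2 > 0 \<and>
                 (\<forall>N \<ge> 2.
                    let I = (LINT E|lborel. 1 / (opnorm (Ttrans (\<lambda>n. of_real (v n)) N E))\<^sup>2);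
                        q = - (lop_inv N v zl zr (proj N N) $$ (0, 0))
                    in Im q = 0 \<and> c1 * I \<le> Re q \<and> Re q \<le> c2 * I))))"
proof (rule conjI)
  show "\<exists>a b. a > 0 \<and> b > 0 \<and>
            (\<forall>(v :: nat \<Rightarrow> real) N (E :: real). bounded (range v) \<and> N \<ge> 2 \<longrightarrow>
               a * opnorm (Ttrans (\<lambda>n. of_real (v n)) N E) \<le> opnorm (Ttrans (vtilde v N zl zr) N E) \<and>
               opnorm (Ttrans (vtilde v N zl zr) N E) \<le> b * opnorm (Ttrans (\<lambda>n. of_real (v n)) N E))"
    by (rule part1[OF assms])
next
  show "zl > 0 \<and> zr > 0 \<longrightarrow>
            (\<forall>v :: nat \<Rightarrow> real. bounded (range v) \<longrightarrow>
              (\<exists>c1 c2. c1 > 0 \<and> c2 > 0 \<and>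
                 (\<forall>N \<ge> 2.
                    let I = (LINT E|lborel. 1 / (opnorm (Ttrans (\<lambda>n. of_real (v n)) N E))\<^sup>2);
                        q = - (lop_inv N v zl zr (proj N N) $$ (0, 0))
                    in Im q = 0 \<and> c1 * I \<le> Re q \<and> Re q \<le> c2 * I)))"
  proof (intro impI allI)
    fix v :: "nat \<Rightarrow> real"
    assume z: "zl > 0 \<and> zr > 0" and "bounded (range v)"
    show "\<exists>c1 c2. c1 > 0 \<and> c2 > 0 \<and>
                 (\<forall>N \<ge> 2.
                    let I = (LINT E|lborel. 1 / (opnorm (Ttrans (\<lambda>n. of_real (v n)) N E))\<^sup>2);
                        q = - (lop_inv N v zl zr (proj N N) $$ (0, 0))
                    in Im q = 0 \<and> c1 * I \<le> Re q \<and> Re q \<le> c2 * I)"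
    proof (rule exI[of _ "1/(8*pi*Ku zl zr)"], rule exI[of _ "2/(pi*Kl zl zr)"], intro conjI allI impI)
      show "1/(8*pi*Ku zl zr) > 0" using Ku_pos z by simp
      show "2/(pi*Kl zl zr) > 0" using Kl_pos z by simp
      fix N :: nat assume "N \<ge> 2"
      then show "let I = (LINT E|lborel. 1 / (opnorm (Ttrans (\<lambda>n. of_real (v n)) N E))\<^sup>2);
                        q = - (lop_inv N v zl zr (proj N N) $$ (0, 0))
                    in Im q = 0 \<and> 1/(8*pi*Ku zl zr) * I \<le> Re q \<and> Re q \<le> 2/(pi*Kl zl zr) * I"
        using z by (intro main_N) auto
    qed
  qed
qed

end
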